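(* Let $\alpha=(\alpha_1,\ldots,\alpha_n)$ be a composition (a sequence of nonnegative integers). Then the vertex set of the Newton polytope $\mathrm{Newton}(\kappa_\alpha)$ of the key polynomial $\kappa_\alpha(x)$ is $\{\beta\colon \beta\le\alpha\}$.
   Context: For a polynomial $f=\sum_\alpha c_\alpha x^\alpha\in\mathbb{R}[x_1,\ldots,x_n]$, $\mathrm{Newton}(f)$ is the convex hull of $\{\alpha\colon c_\alpha\neq0\}$. Let $\partial_i f=(f-s_if)/(x_i-x_{i+1})$, where $s_if$ swaps $x_i$ and $x_{i+1}$, and $\pi_i f=\partial_i(x_if)$. Key polynomials: if $\alpha$ is weakly decreasing, $\kappa_\alpha=x^\alpha=x_1^{\alpha_1}\cdots x_n^{\alpha_n}$; otherwise choose $i$ with $\alpha_i<\alpha_{i+1}$, let $\alpha'$ be $\alpha$ with $\alpha_i,\alpha_{i+1}$ interchanged, and set $\kappa_\alpha=\pi_i\kappa_{\alpha'}$ (this is well defined). For $v\in\mathbb{R}^n$ and $w=w_1\cdots w_n\in S_n$, define $v\cdot w=(v_{w_1},\ldots,v_{w_n})$. Let $\lambda(\alpha)$ be the weakly decreasing rearrangement of $\alpha$, and $w(\alpha)$ the unique permutation of minimal length with $\lambda(\alpha)\cdot w(\alpha)=\alpha$. For compositions $\alpha,\beta$ of length $n$, $\beta\le\alpha$ means $\lambda(\beta)=\lambda(\alpha)$ and $w(\beta)\le w(\alpha)$ in the (strong) Bruhat order on $S_n$. *)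

theory Defs
  imports "HOL-Analysis.Analysis" "HOL-Library.Poly_Mapping" "HOL-Library.Function_Algebras"
    "HOL-Combinatorics.Transposition" "HOL-Combinatorics.Permutations"
begin

instantiation "fun" :: (type, real_vector) real_vector
begin
definition scaleR_fun_def: "scaleR r f = (\<lambda>x. r *\<^sub>R f x)"
instance
  by standard (auto simp: scaleR_fun_def fun_eq_iff algebra_simps scaleR_left_distrib)
end

section \<open>Polynomials in variables x_0, x_1, ... (0-based; paper's x_{i+1} is our x_i)\<close>

type_synonym mpoly = "(nat \<Rightarrow>\<^sub>0 nat) \<Rightarrow>\<^sub>0 real"

definition var :: "nat \<Rightarrow> mpoly" where
  "var i = Poly_Mapping.single (Poly_Mapping.single i 1) 1"

definition monom :: "nat list \<Rightarrow> mpoly" where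
  "monom \<beta> = Poly_Mapping.single (Poly_Mapping.nth \<beta>) 1"

definition swap_exp :: "nat \<Rightarrow> (nat \<Rightarrow>\<^sub>0 nat) \<Rightarrow> (nat \<Rightarrow>\<^sub>0 nat)" where
  "swap_exp i m = Poly_Mapping.map_key (Transposition.transpose i (Suc i)) m"

definition swapvar :: "nat \<Rightarrow> mpoly \<Rightarrow> mpoly" where
  "swapvar i f = Poly_Mapping.map_key (swap_exp i) f"

definition divdiff :: "nat \<Rightarrow> mpoly \<Rightarrow> mpoly" where
  "divdiff i f = (THE g. (var i - var (Suc i)) * g = f - swapvar i f)"

definition demazure :: "nat \<Rightarrow> mpoly \<Rightarrow> mpoly" where
  "demazure i f = divdiff i (var i * f)"

text \<open>Key polynomials, via the recursive rule of the paper (as a relation; it is well defined)\<close>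
inductive keyrel :: "nat list \<Rightarrow> mpoly \<Rightarrow> bool" where
  dec: "sorted_wrt (\<ge>) \<alpha> \<Longrightarrow> keyrel \<alpha> (monom \<alpha>)"
| step: "Suc i < length \<alpha> \<Longrightarrow> \<alpha> ! i < \<alpha> ! Suc i \<Longrightarrow>
          keyrel (\<alpha>[i := \<alpha> ! Suc i, Suc i := \<alpha> ! i]) g \<Longrightarrow> keyrel \<alpha> (demazure i g)"

definition key :: "nat list \<Rightarrow> mpoly" where
  "key \<alpha> = (THE f. keyrel \<alpha> f)"

text \<open>exponent vector as a point of R^n (coordinates beyond n are 0)\<close>
definition exp_point :: "(nat \<Rightarrow>\<^sub>0 nat) \<Rightarrow> (nat \<Rightarrow> real)" where
  "exp_point m = (\<lambda>k. real (Poly_Mapping.lookup m k))"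

definition newton :: "mpoly \<Rightarrow> (nat \<Rightarrow> real) set" where
  "newton f = convex hull (exp_point ` Poly_Mapping.keys f)"

definition vertices :: "(nat \<Rightarrow> real) set \<Rightarrow> (nat \<Rightarrow> real) set" where
  "vertices P = {v. v extreme_point_of P}"

definition act :: "nat list \<Rightarrow> (nat \<Rightarrow> nat) \<Rightarrow> nat list" where
  "act v w = map (\<lambda>i. v ! w i) [0..<length v]"

definition perm_length :: "nat \<Rightarrow> (nat \<Rightarrow> nat) \<Rightarrow> nat" where
  "perm_length n w = card {(i, j). i < j \<and> j < n \<and> w j < w i}"

definition bruhat_cover :: "nat \<Rightarrow> (nat \<Rightarrow> nat) \<Rightarrow> (nat \<Rightarrow> nat) \<Rightarrow> bool" where
  "bruhat_cover n u v \<longleftrightarrow> (\<exists>i j. i < j \<and> j < n \<and> v = u \<circ> Transposition.transpose i j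
       \<and> perm_length n u < perm_length n v)"

definition bruhat_le :: "nat \<Rightarrow> (nat \<Rightarrow> nat) \<Rightarrow> (nat \<Rightarrow> nat) \<Rightarrow> bool" where
  "bruhat_le n u v \<longleftrightarrow> u permutes {..<n} \<and> v permutes {..<n} \<and> (bruhat_cover n)\<^sup>*\<^sup>* u v"

definition lam :: "nat list \<Rightarrow> nat list" where
  "lam \<alpha> = rev (sort \<alpha>)"

definition wperm :: "nat list \<Rightarrow> (nat \<Rightarrow> nat)" where
  "wperm \<alpha> = (THE w. w permutes {..<length \<alpha>} \<and> act (lam \<alpha>) w = \<alpha> \<and>
     (\<forall>u. u permutes {..<length \<alpha>} \<and> act (lam \<alpha>) u = \<alpha> \<longrightarrow>
          perm_length (length \<alpha>) w \<le> perm_length (length \<alpha>) u))"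

definition comp_le :: "nat list \<Rightarrow> nat list \<Rightarrow> bool" where
  "comp_le \<beta> \<alpha> \<longleftrightarrow> length \<beta> = length \<alpha> \<and> lam \<beta> = lam \<alpha> \<and>
     bruhat_le (length \<alpha>) (wperm \<beta>) (wperm \<alpha>)"

end

theory Submission
  imports Defs
begin


definition cnt :: "nat list \<Rightarrow> nat \<Rightarrow> nat \<Rightarrow> int" where
  "cnt \<gamma> k t = (\<Sum>q<k. if t \<le> \<gamma>!q then 1 else 0)"

definition Dle :: "nat list \<Rightarrow> nat list \<Rightarrow> bool" where
  "Dle \<beta> \<alpha> \<longleftrightarrow> (\<forall>k\<le>length \<alpha>. \<forall>t. cnt \<alpha> k t \<le> cnt \<beta> k t)"

definition Cset :: "nat list \<Rightarrow> nat list set" where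
  "Cset \<alpha> = {\<beta>. length \<beta> = length \<alpha> \<and> mset \<beta> = mset \<alpha> \<and> Dle \<beta> \<alpha>}"

definition swp :: "nat \<Rightarrow> nat \<Rightarrow> nat list \<Rightarrow> nat list" where
  "swp i j \<gamma> = \<gamma>[i := \<gamma>!j, j := \<gamma>!i]"

lemma length_swp[simp]: "length (swp i j \<gamma>) = length \<gamma>"
  by (simp add: swp_def)

lemma nth_swp: "i < length \<gamma> \<Longrightarrow> j < length \<gamma> \<Longrightarrow>
  swp i j \<gamma> ! k = (if k = j then \<gamma>!i else if k = i then \<gamma>!j else \<gamma>!k)"
  by (auto simp: swp_def nth_list_update)

lemma nth_swp_tr: "i < length \<gamma> \<Longrightarrow> j < length \<gamma> \<Longrightarrow>
  swp i j \<gamma> ! k = \<gamma> ! (Transposition.transpose i j k)"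
  by (auto simp: nth_swp Transposition.transpose_def)

lemma mset_swp: "i < length \<gamma> \<Longrightarrow> j < length \<gamma> \<Longrightarrow> mset (swp i j \<gamma>) = mset \<gamma>"
  unfolding swp_def by (rule mset_swap)

lemma swp_swp: "i < length \<gamma> \<Longrightarrow> j < length \<gamma> \<Longrightarrow> swp i j (swp i j \<gamma>) = \<gamma>"
  by (rule nth_equalityI) (auto simp: nth_swp)

lemma swp_same: "i < length \<gamma> \<Longrightarrow> j < length \<gamma> \<Longrightarrow> \<gamma>!i = \<gamma>!j \<Longrightarrow> swp i j \<gamma> = \<gamma>"
  by (rule nth_equalityI) (auto simp: nth_swp)

lemma cnt_Suc: "cnt \<gamma> (Suc k) t = cnt \<gamma> k t + (if t \<le> \<gamma>!k then 1 else 0)"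
  by (simp add: cnt_def)

lemma cnt_cong: "(\<And>q. q < k \<Longrightarrow> \<beta>!q = \<alpha>!q) \<Longrightarrow> cnt \<beta> k t = cnt \<alpha> k t"
  unfolding cnt_def by (rule sum.cong) auto

lemma cnt_split: "p \<le> k \<Longrightarrow> cnt \<gamma> k t = cnt \<gamma> p t + (\<Sum>q\<in>{p..<k}. if t \<le> \<gamma>!q then 1 else 0)"
  unfolding cnt_def
  by (metis atLeast0LessThan sum.atLeastLessThan_concat zero_le)

lemma cnt_swp:
  assumes "i < j" "j < length \<gamma>"
  shows "cnt (swp i j \<gamma>) k t = cnt \<gamma> k t +
    (if i < k \<and> k \<le> j then (if t \<le> \<gamma>!j then 1 else 0) - (if t \<le> \<gamma>!i then 1 else 0) else 0)"
proof -
  let ?f = "\<lambda>q. (if t \<le> \<gamma>!q then 1 else 0) :: int"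
  let ?g = "\<lambda>q. (if t \<le> swp i j \<gamma>!q then 1 else 0) :: int"
  have "\<And>q. ?g q - ?f q = (if q = i then ?f j - ?f i else 0) + (if q = j then ?f i - ?f j else 0)"
    using assms by (auto simp: nth_swp)
  hence "(\<Sum>q<k. ?g q - ?f q) = (\<Sum>q<k. (if q = i then ?f j - ?f i else 0)) + (\<Sum>q<k. (if q = j then ?f i - ?f j else 0))"
    by (simp add: sum.distrib)
  also have "\<dots> = (if i < k then ?f j - ?f i else 0) + (if j < k then ?f i - ?f j else 0)"
    by (simp add: sum.delta)
  finally have "(\<Sum>q<k. ?g q) - (\<Sum>q<k. ?f q) = (if i < k then ?f j - ?f i else 0) + (if j < k then ?f i - ?f j else 0)"
    by (simp add: sum_subtractf)
  thus ?thesis unfolding cnt_def using assms by auto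
qed

lemma Dle_refl: "Dle \<alpha> \<alpha>" by (simp add: Dle_def)

lemma Dle_trans: "Dle a b \<Longrightarrow> Dle b c \<Longrightarrow> length b = length c \<Longrightarrow> Dle a c"
  unfolding Dle_def by (metis order_trans)

lemma Dle_swp_down:
  assumes "i < j" "j < length \<gamma>" "\<gamma>!j \<le> \<gamma>!i"
  shows "Dle \<gamma> (swp i j \<gamma>)"
  unfolding Dle_def using assms by (auto simp: cnt_swp)

section \<open>inversions\<close>

definition invs :: "nat \<Rightarrow> (nat \<Rightarrow> nat) \<Rightarrow> (nat \<times> nat) set" where
  "invs n w = {(i, j). i < j \<and> j < n \<and> w j < w i}"

lemma perm_length_invs: "perm_length n w = card (invs n w)"
  by (simp add: perm_length_def invs_def)

lemma finite_invs: "finite (invs n w)"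
proof -
  have "invs n w \<subseteq> {..<n} \<times> {..<n}" by (auto simp: invs_def)
  thus ?thesis by (rule finite_subset) auto
qed

lemma length_swap_up:
  assumes ij: "i < j" "j < n" and u: "u i < u j"
  shows "perm_length n u < perm_length n (u \<circ> Transposition.transpose i j)"
proof -
  define \<tau> where "\<tau> = Transposition.transpose i j"
  define v where "v = u \<circ> \<tau>"
  define \<phi> where "\<phi> = (\<lambda>(a::nat, b::nat). if \<tau> a < \<tau> b then (\<tau> a, \<tau> b) else (a, b))"
  have tt: "\<And>x. \<tau> (\<tau> x) = x" by (simp add: \<tau>_def)
  have tn: "\<And>x. x < n \<Longrightarrow> \<tau> x < n" using ij by (auto simp: \<tau>_def Transposition.transpose_def)
  have img: "\<phi> ` invs n u \<subseteq> invs n v - {(i, j)}"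
  proof
    fix p assume "p \<in> \<phi> ` invs n u"
    then obtain a b where ab: "(a, b) \<in> invs n u" "p = \<phi> (a, b)" by auto
    hence a: "a < b" "b < n" "u b < u a" by (auto simp: invs_def)
    show "p \<in> invs n v - {(i, j)}"
    proof (cases "\<tau> a < \<tau> b")
      case True
      hence "p = (\<tau> a, \<tau> b)" using ab by (simp add: \<phi>_def)
      moreover have "\<tau> b < n" using tn a by auto
      moreover have "v (\<tau> b) < v (\<tau> a)" using a by (simp add: v_def tt)
      moreover have "(\<tau> a, \<tau> b) \<noteq> (i, j)"
        using a ij by (auto simp: \<tau>_def Transposition.transpose_def split: if_splits)
      ultimately show ?thesis using True by (auto simp: invs_def)
    next
      case False
      hence p: "p = (a, b)" using ab by (simp add: \<phi>_def)
      have "v b < v a \<and> (a, b) \<noteq> (i, j)"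
        using False a ij u unfolding v_def \<tau>_def Transposition.transpose_def
        by (auto split: if_splits)
      thus ?thesis using p a by (auto simp: invs_def)
    qed
  qed
  have inj: "inj_on \<phi> (invs n u)"
  proof (rule inj_onI)
    fix p q assume "p \<in> invs n u" "q \<in> invs n u" "\<phi> p = \<phi> q"
    then obtain a b c d where p: "p = (a, b)" "a < b" and q: "q = (c, d)" "c < d" and e: "\<phi> (a,b) = \<phi> (c,d)"
      by (auto simp: invs_def)
    have "\<And>x y. \<tau> x = \<tau> y \<Longrightarrow> x = y" by (metis tt)
    then show "p = q" using p q e tt unfolding \<phi>_def
      by (auto split: if_splits)
  qed
  have ijin: "(i, j) \<in> invs n v" using ij u by (simp add: invs_def v_def \<tau>_def)
  have "card (invs n u) = card (\<phi> ` invs n u)" using inj by (simp add: card_image)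
  also have "\<dots> \<le> card (invs n v - {(i, j)})"
    by (rule card_mono[OF _ img]) (simp add: finite_invs)
  also have "\<dots> < card (invs n v)"
    using ijin finite_invs[of n v] by (meson card_Diff1_less)
  finally show ?thesis by (simp add: perm_length_invs v_def \<tau>_def)
qed



lemma length_act[simp]: "length (act v w) = length v"
  by (simp add: act_def)

lemma nth_act: "k < length v \<Longrightarrow> act v w ! k = v ! w k"
  by (simp add: act_def)

lemma length_lam[simp]: "length (lam \<alpha>) = length \<alpha>"
  by (simp add: lam_def)

lemma mset_lam: "mset (lam \<alpha>) = mset \<alpha>"
  by (simp add: lam_def)

lemma lam_dec: "a \<le> b \<Longrightarrow> b < length \<alpha> \<Longrightarrow> lam \<alpha> ! b \<le> lam \<alpha> ! a"
  using sorted_rev_nth_mono[of "lam \<alpha>" a b] by (simp add: lam_def)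

lemma lam_eq_iff: "lam \<beta> = lam \<alpha> \<longleftrightarrow> mset \<beta> = mset \<alpha>"
proof
  assume "lam \<beta> = lam \<alpha>" thus "mset \<beta> = mset \<alpha>" by (metis mset_lam)
next
  assume "mset \<beta> = mset \<alpha>"
  hence "sort \<beta> = sort \<alpha>" using properties_for_sort[of "sort \<alpha>" \<beta>] by simp
  thus "lam \<beta> = lam \<alpha>" by (simp add: lam_def)
qed

lemma act_comp_tr: "i < length v \<Longrightarrow> j < length v \<Longrightarrow>
   act v (w \<circ> Transposition.transpose i j) = swp i j (act v w)"
proof (rule nth_equalityI)
  fix x assume "i < length v" "j < length v" "x < length (act v (w \<circ> Transposition.transpose i j))"
  moreover hence "Transposition.transpose i j x < length v" by (auto simp: Transposition.transpose_def)
  ultimately show "act v (w \<circ> Transposition.transpose i j) ! x = swp i j (act v w) ! x"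
    by (simp add: nth_act nth_swp_tr)
qed simp

definition tied :: "nat list \<Rightarrow> (nat \<Rightarrow> nat) \<Rightarrow> bool" where
  "tied \<alpha> w \<longleftrightarrow> (\<forall>k l. k < l \<longrightarrow> l < length \<alpha> \<longrightarrow> \<alpha>!k = \<alpha>!l \<longrightarrow> w k < w l)"

definition cand :: "nat list \<Rightarrow> (nat \<Rightarrow> nat) \<Rightarrow> bool" where
  "cand \<alpha> w \<longleftrightarrow> w permutes {..<length \<alpha>} \<and> act (lam \<alpha>) w = \<alpha>"

lemma cand_nth: "cand \<alpha> w \<Longrightarrow> k < length \<alpha> \<Longrightarrow> \<alpha> ! k = lam \<alpha> ! w k"
  unfolding cand_def by (metis length_lam nth_act)

lemma cand_lt: "cand \<alpha> w \<Longrightarrow> k < length \<alpha> \<Longrightarrow> w k < length \<alpha>"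
  unfolding cand_def by (meson lessThan_iff permutes_in_image)

lemma cand_card:
  assumes c: "cand \<alpha> w" and t: "tied \<alpha> w" and k: "k < length \<alpha>"
  shows "w k = card {j. j < length \<alpha> \<and> (\<alpha>!k < \<alpha>!j \<or> (\<alpha>!j = \<alpha>!k \<and> j < k))}"
proof -
  let ?n = "length \<alpha>"
  have p: "w permutes {..<?n}" using c by (simp add: cand_def)
  define S where "S = {j. j < ?n \<and> w j < w k}"
  have wk: "w k < ?n" using cand_lt[OF c k] .
  have "w ` S = {..<w k}"
  proof
    show "w ` S \<subseteq> {..<w k}" by (auto simp: S_def)
  next
    show "{..<w k} \<subseteq> w ` S"
    proof
      fix r assume r: "r \<in> {..<w k}"
      hence "r \<in> w ` {..<?n}" using permutes_image[OF p] wk by auto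
      then obtain j where "j < ?n" "w j = r" by auto
      thus "r \<in> w ` S" using r by (auto simp: S_def)
    qed
  qed
  moreover have "inj_on w S" using permutes_inj[OF p] by (simp add: inj_on_def)
  ultimately have cS: "card S = w k" by (metis card_image card_lessThan)
  have "S = {j. j < ?n \<and> (\<alpha>!k < \<alpha>!j \<or> (\<alpha>!j = \<alpha>!k \<and> j < k))}"
    unfolding S_def
  proof (rule Collect_cong, rule iffI)
    fix j assume j: "j < ?n \<and> w j < w k"
    have wj: "w j < ?n" using cand_lt[OF c] j by auto
    have "\<alpha>!j \<ge> \<alpha>!k" using j lam_dec[of "w j" "w k" \<alpha>] wk cand_nth[OF c] k by auto
    moreover have "\<alpha>!j = \<alpha>!k \<Longrightarrow> j < k"
    proof (rule ccontr)
      assume "\<alpha>!j = \<alpha>!k" "\<not> j < k"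
      moreover have "j \<noteq> k" using j by auto
      ultimately have kj: "k < j" by simp
      have "w k < w j" using t j kj \<open>\<alpha>!j = \<alpha>!k\<close> unfolding tied_def by auto
      thus False using j by auto
    qed
    ultimately show "j < ?n \<and> (\<alpha>!k < \<alpha>!j \<or> (\<alpha>!j = \<alpha>!k \<and> j < k))" using j by auto
  next
    fix j assume j: "j < ?n \<and> (\<alpha>!k < \<alpha>!j \<or> (\<alpha>!j = \<alpha>!k \<and> j < k))"
    have wj: "w j < ?n" using cand_lt[OF c] j by auto
    show "j < ?n \<and> w j < w k"
    proof (cases "\<alpha>!k < \<alpha>!j")
      case True
      have "\<not> w k \<le> w j"
      proof
        assume "w k \<le> w j"
        hence "lam \<alpha> ! w j \<le> lam \<alpha> ! w k" using lam_dec wj by auto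
        thus False using True cand_nth[OF c] j k by auto
      qed
      thus ?thesis using j by auto
    next
      case False
      hence "\<alpha>!j = \<alpha>!k \<and> j < k" using j by auto
      thus ?thesis using t j k unfolding tied_def by auto
    qed
  qed
  thus ?thesis using cS S_def by simp
qed

lemma tied_unique:
  assumes "cand \<alpha> w1" "tied \<alpha> w1" "cand \<alpha> w2" "tied \<alpha> w2"
  shows "w1 = w2"
proof
  fix x show "w1 x = w2 x"
  proof (cases "x < length \<alpha>")
    case True
    have "w1 x = card {j. j < length \<alpha> \<and> (\<alpha>!x < \<alpha>!j \<or> (\<alpha>!j = \<alpha>!x \<and> j < x))}"
      by (rule cand_card[OF assms(1,2) True])
    moreover have "w2 x = card {j. j < length \<alpha> \<and> (\<alpha>!x < \<alpha>!j \<or> (\<alpha>!j = \<alpha>!x \<and> j < x))}"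
      by (rule cand_card[OF assms(3,4) True])
    ultimately show ?thesis by simp
  next
    case False
    have "w1 permutes {..<length \<alpha>}" "w2 permutes {..<length \<alpha>}" using assms by (auto simp: cand_def)
    thus ?thesis using False by (simp add: permutes_not_in)
  qed
qed

lemma comp_tr_tr: "(w \<circ> Transposition.transpose i j) \<circ> Transposition.transpose i j = w"
  by (simp add: o_assoc[symmetric] transpose_comp_involutory)

lemma untied_shorter:
  assumes c: "cand \<alpha> w" and nt: "\<not> tied \<alpha> w"
  shows "\<exists>w'. cand \<alpha> w' \<and> perm_length (length \<alpha>) w' < perm_length (length \<alpha>) w"
proof -
  let ?n = "length \<alpha>"
  obtain k l where kl: "k < l" "l < ?n" "\<alpha>!k = \<alpha>!l" "\<not> w k < w l"
    using nt by (auto simp: tied_def)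
  have p: "w permutes {..<?n}" using c by (simp add: cand_def)
  have "w k \<noteq> w l" using permutes_inj[OF p] kl by (metis injD less_irrefl)
  hence wlk: "w l < w k" using kl by auto
  define w' where "w' = w \<circ> Transposition.transpose k l"
  have "w' permutes {..<?n}" unfolding w'_def
    using kl by (intro permutes_compose[OF _ p] permutes_swap_id) auto
  moreover have "act (lam \<alpha>) w' = \<alpha>" unfolding w'_def using kl c
    by (simp add: act_comp_tr cand_def swp_same)
  ultimately have "cand \<alpha> w'" by (simp add: cand_def)
  moreover have "perm_length ?n w' < perm_length ?n (w' \<circ> Transposition.transpose k l)"
    using kl wlk by (intro length_swap_up) (auto simp: w'_def)
  ultimately show ?thesis by (auto simp: w'_def comp_tr_tr)
qed

lemma wperm_props: "cand \<alpha> (wperm \<alpha>) \<and> tied \<alpha> (wperm \<alpha>)"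
proof -
  let ?n = "length \<alpha>"
  define P where "P w \<longleftrightarrow> cand \<alpha> w \<and> (\<forall>u. cand \<alpha> u \<longrightarrow> perm_length ?n w \<le> perm_length ?n u)" for w
  have W: "wperm \<alpha> = (THE w. P w)" unfolding wperm_def P_def cand_def by simp
  obtain p where "p permutes {..<length (lam \<alpha>)}" "permute_list p (lam \<alpha>) = \<alpha>"
    using mset_eq_permutation[of \<alpha> "lam \<alpha>"] mset_lam by metis
  hence "cand \<alpha> p" by (simp add: cand_def act_def permute_list_def)
  then obtain w0 where "cand \<alpha> w0" "\<forall>u. cand \<alpha> u \<longrightarrow> perm_length ?n w0 \<le> perm_length ?n u"
    using ex_has_least_nat[of "cand \<alpha>" p "perm_length ?n"] by blast
  hence P0: "P w0" by (simp add: P_def)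
  have Pt: "P w \<Longrightarrow> tied \<alpha> w" for w
  proof (rule ccontr)
    assume "P w" "\<not> tied \<alpha> w"
    then obtain w' where "cand \<alpha> w'" "perm_length ?n w' < perm_length ?n w"
      using untied_shorter unfolding P_def by blast
    thus False using \<open>P w\<close> unfolding P_def by (meson leD)
  qed
  have "\<exists>!w. P w"
  proof (rule ex_ex1I)
    show "\<exists>w. P w" using P0 by blast
  next
    fix a b assume "P a" "P b"
    thus "a = b" using Pt tied_unique unfolding P_def by blast
  qed
  hence "P (wperm \<alpha>)" unfolding W by (rule theI')
  thus ?thesis using Pt by (simp add: P_def)
qed

lemma wperm_unique: "cand \<alpha> w \<Longrightarrow> tied \<alpha> w \<Longrightarrow> w = wperm \<alpha>"
  using wperm_props tied_unique by blast

lemma tr_order: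
  fixes \<alpha> :: "nat list"
  assumes ij: "i < j" and kl: "k < l" and e: "\<alpha>!k = \<alpha>!l" and d: "\<alpha>!i \<noteq> \<alpha>!j"
    and nb: "\<forall>m. i < m \<and> m < j \<longrightarrow> \<alpha>!m \<noteq> \<alpha>!i \<and> \<alpha>!m \<noteq> \<alpha>!j"
  shows "Transposition.transpose i j k < Transposition.transpose i j l"
proof -
  have A: "\<not> (i < m \<and> m < j)" if "\<alpha>!m = \<alpha>!i \<or> \<alpha>!m = \<alpha>!j" for m using nb that by auto
  show ?thesis
  proof (cases "k = i")
    case True
    hence "l \<noteq> j" using e d by auto
    moreover have "\<not> (i < l \<and> l < j)" using A[of l] e True by auto
    ultimately show ?thesis using True kl ij by (auto simp: Transposition.transpose_def)
  next
    case ki: False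
    show ?thesis
    proof (cases "k = j")
      case True
      thus ?thesis using kl ij by (auto simp: Transposition.transpose_def)
    next
      case kj: False
      show ?thesis
      proof (cases "l = i")
        case True thus ?thesis using kl ij ki kj by (auto simp: Transposition.transpose_def)
      next
        case li: False
        show ?thesis
        proof (cases "l = j")
          case True
          have "\<not> (i < k \<and> k < j)" using A[of k] e True by auto
          thus ?thesis using True kl ij ki kj by (auto simp: Transposition.transpose_def)
        next
          case False thus ?thesis using kl ki kj li by (auto simp: Transposition.transpose_def)
        qed
      qed
    qed
  qed
qed

lemma SW:
  assumes ij: "i < j" "j < length \<alpha>" and lt: "\<alpha>!i < \<alpha>!j"
    and nb: "\<forall>m. i < m \<and> m < j \<longrightarrow> \<alpha>!m \<noteq> \<alpha>!i \<and> \<alpha>!m \<noteq> \<alpha>!j"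
  shows "wperm \<alpha> = wperm (swp i j \<alpha>) \<circ> Transposition.transpose i j \<and>
         perm_length (length \<alpha>) (wperm (swp i j \<alpha>)) < perm_length (length \<alpha>) (wperm \<alpha>)"
proof -
  let ?n = "length \<alpha>"
  define \<alpha>' where "\<alpha>' = swp i j \<alpha>"
  define w' where "w' = wperm \<alpha>'"
  define \<tau> where "\<tau> = Transposition.transpose i j"
  have len: "length \<alpha>' = ?n" by (simp add: \<alpha>'_def)
  have lam: "lam \<alpha>' = lam \<alpha>" using ij by (simp add: lam_eq_iff \<alpha>'_def mset_swp)
  have c': "cand \<alpha>' w'" and t': "tied \<alpha>' w'" using wperm_props[of \<alpha>'] by (auto simp: w'_def)
  have p': "w' permutes {..<?n}" using c' len by (simp add: cand_def)
  define v where "v = w' \<circ> \<tau>"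
  have "v permutes {..<?n}" unfolding v_def \<tau>_def
    using ij by (intro permutes_compose[OF _ p'] permutes_swap_id) auto
  moreover have "act (lam \<alpha>) v = \<alpha>"
  proof -
    have "act (lam \<alpha>) v = swp i j (act (lam \<alpha>') w')" unfolding v_def \<tau>_def lam
      using ij by (simp add: act_comp_tr)
    also have "\<dots> = swp i j \<alpha>'" using c' by (simp add: cand_def)
    also have "\<dots> = \<alpha>" using ij by (simp add: \<alpha>'_def swp_swp)
    finally show ?thesis .
  qed
  ultimately have cv: "cand \<alpha> v" by (simp add: cand_def)
  have a'tau: "\<alpha>' ! (\<tau> x) = \<alpha> ! x" for x
    using ij by (simp add: \<alpha>'_def \<tau>_def nth_swp_tr transpose_involutory)
  have tn: "x < ?n \<Longrightarrow> \<tau> x < ?n" for x using ij by (auto simp: \<tau>_def Transposition.transpose_def)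
  have tv: "tied \<alpha> v"
    unfolding tied_def
  proof (intro allI impI)
    fix k l assume kl: "k < l" "l < ?n" "\<alpha>!k = \<alpha>!l"
    have "\<tau> k < \<tau> l" unfolding \<tau>_def
      using tr_order[OF ij(1) kl(1) kl(3) _ nb] lt by auto
    moreover have "\<alpha>' ! (\<tau> k) = \<alpha>' ! (\<tau> l)" using kl a'tau by simp
    ultimately show "v k < v l" using t' tn kl len unfolding tied_def v_def by auto
  qed
  have E: "wperm \<alpha> = w' \<circ> \<tau>" using wperm_unique[OF cv tv] by (simp add: v_def)
  have "w' i < w' j"
  proof (rule ccontr)
    assume "\<not> w' i < w' j"
    hence "lam \<alpha> ! w' i \<le> lam \<alpha> ! w' j" using lam_dec cand_lt[OF c'] ij len lam by auto
    moreover have "\<alpha>' ! i = lam \<alpha> ! w' i" "\<alpha>' ! j = lam \<alpha> ! w' j"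
      using cand_nth[OF c'] ij len lam by auto
    moreover have "\<alpha>' ! i = \<alpha> ! j" "\<alpha>' ! j = \<alpha> ! i" using ij by (auto simp: \<alpha>'_def nth_swp)
    ultimately show False using lt by auto
  qed
  hence "perm_length ?n w' < perm_length ?n (w' \<circ> \<tau>)"
    unfolding \<tau>_def using ij by (intro length_swap_up) auto
  thus ?thesis using E by (simp add: w'_def \<alpha>'_def \<tau>_def)
qed



lemma FD:
  assumes len: "length \<beta> = length \<alpha>" and ms: "mset \<beta> = mset \<alpha>" and D: "Dle \<beta> \<alpha>" and ne: "\<beta> \<noteq> \<alpha>"
  shows "\<exists>p<length \<alpha>. (\<forall>q<p. \<beta>!q = \<alpha>!q) \<and> \<alpha>!p < \<beta>!p \<and> (\<exists>q. p < q \<and> q < length \<alpha> \<and> \<alpha>!q = \<beta>!p)"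
proof -
  let ?n = "length \<alpha>"
  have ex: "\<exists>q. q < ?n \<and> \<beta>!q \<noteq> \<alpha>!q" using len ne nth_equalityI by metis
  define p where "p = (LEAST q. q < ?n \<and> \<beta>!q \<noteq> \<alpha>!q)"
  have p: "p < ?n" "\<beta>!p \<noteq> \<alpha>!p" using LeastI_ex[OF ex] unfolding p_def by auto
  have pre: "\<forall>q<p. \<beta>!q = \<alpha>!q"
  proof (intro allI impI)
    fix q assume q: "q < p"
    hence "\<not> (q < ?n \<and> \<beta>!q \<noteq> \<alpha>!q)" unfolding p_def by (rule not_less_Least)
    thus "\<beta>!q = \<alpha>!q" using q p by auto
  qed
  have "cnt \<alpha> (Suc p) (\<alpha>!p) \<le> cnt \<beta> (Suc p) (\<alpha>!p)" using D p(1) by (simp add: Dle_def)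
  moreover have "cnt \<beta> p (\<alpha>!p) = cnt \<alpha> p (\<alpha>!p)" by (rule cnt_cong) (use pre in auto)
  ultimately have "\<alpha>!p \<le> \<beta>!p" by (auto simp: cnt_Suc split: if_splits)
  hence lt: "\<alpha>!p < \<beta>!p" using p(2) by auto
  have tk: "take p \<beta> = take p \<alpha>" by (rule nth_equalityI) (use pre p len in auto)
  have "mset (take p \<beta>) + mset (drop p \<beta>) = mset (take p \<alpha>) + mset (drop p \<alpha>)"
    using ms by (simp flip: mset_append)
  hence md: "mset (drop p \<beta>) = mset (drop p \<alpha>)" using tk by simp
  have "\<beta>!p \<in> set (drop p \<beta>)" using p len by (metis Cons_nth_drop_Suc list.set_intros(1))
  hence "\<beta>!p \<in> set (drop p \<alpha>)" using md by (metis set_mset_mset)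
  then obtain r where r: "r < length (drop p \<alpha>)" "drop p \<alpha> ! r = \<beta>!p" by (auto simp: in_set_conv_nth)
  hence r2: "\<alpha>!(p+r) = \<beta>!p" "p + r < ?n" by auto
  moreover have "r \<noteq> 0" using r2 p by (metis add_0_right)
  ultimately show ?thesis using p lt pre by (intro exI[of _ p]) (auto intro!: exI[of _ "p+r"])
qed

lemma CL:
  assumes len: "length \<beta> = length \<alpha>" and ms: "mset \<beta> = mset \<alpha>" and D: "Dle \<beta> \<alpha>" and ne: "\<beta> \<noteq> \<alpha>"
  shows "\<exists>i j. i < j \<and> j < length \<alpha> \<and> \<alpha>!i < \<alpha>!j \<and>
     (\<forall>m. i < m \<and> m < j \<longrightarrow> \<alpha>!m \<noteq> \<alpha>!i \<and> \<alpha>!m \<noteq> \<alpha>!j) \<and> Dle \<beta> (swp i j \<alpha>)"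
proof -
  let ?n = "length \<alpha>"
  obtain p q0 where p: "p < ?n" "\<forall>q<p. \<beta>!q = \<alpha>!q" "\<alpha>!p < \<beta>!p"
    and q0: "p < q0" "q0 < ?n" "\<alpha>!q0 = \<beta>!p"
    using FD[OF assms] by blast
  define Pj where "Pj q \<longleftrightarrow> p < q \<and> q < ?n \<and> \<alpha>!p < \<alpha>!q \<and> \<alpha>!q \<le> \<beta>!p" for q
  have "Pj q0" using p q0 by (simp add: Pj_def)
  define j where "j = (LEAST q. Pj q)"
  have j: "Pj j" using LeastI[of Pj q0] \<open>Pj q0\<close> j_def by simp
  have jmin: "\<And>m. m < j \<Longrightarrow> \<not> Pj m" unfolding j_def by (rule not_less_Least)
  define I where "I = {q. p \<le> q \<and> q < j \<and> \<alpha>!q = \<alpha>!p}"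
  have fI: "finite I" by (rule finite_subset[of _ "{..<j}"]) (auto simp: I_def)
  have pI: "p \<in> I" using j by (auto simp: I_def Pj_def)
  define i where "i = Max I"
  have "I \<noteq> {}" using pI by auto
  hence iI: "i \<in> I" using fI Max_in[of I] by (simp add: i_def)
  have imax: "\<And>m. m \<in> I \<Longrightarrow> m \<le> i" using fI by (simp add: i_def)
  have ij: "p \<le> i" "i < j" "\<alpha>!i = \<alpha>!p" using iI by (auto simp: I_def)
  have jj: "p < j" "j < ?n" "\<alpha>!p < \<alpha>!j" "\<alpha>!j \<le> \<beta>!p" using j by (auto simp: Pj_def)
  have btw: "\<not> (\<alpha>!p < \<alpha>!m \<and> \<alpha>!m \<le> \<beta>!p)" if "p < m" "m < j" for m
    using jmin[OF that(2)] that jj by (auto simp: Pj_def)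
  have nb: "\<forall>m. i < m \<and> m < j \<longrightarrow> \<alpha>!m \<noteq> \<alpha>!i \<and> \<alpha>!m \<noteq> \<alpha>!j"
  proof (intro allI impI)
    fix m assume m: "i < m \<and> m < j"
    have "\<alpha>!m \<noteq> \<alpha>!i"
    proof
      assume "\<alpha>!m = \<alpha>!i"
      hence "m \<in> I" using m ij by (auto simp: I_def)
      thus False using imax m by fastforce
    qed
    moreover have "\<alpha>!m \<noteq> \<alpha>!j" using btw[of m] m ij jj by auto
    ultimately show "\<alpha>!m \<noteq> \<alpha>!i \<and> \<alpha>!m \<noteq> \<alpha>!j" by simp
  qed
  have Dn: "Dle \<beta> (swp i j \<alpha>)"
    unfolding Dle_def
  proof (intro allI impI)
    fix k t assume k: "k \<le> length (swp i j \<alpha>)"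
    hence kn: "k \<le> ?n" by simp
    have c0: "cnt \<alpha> k t \<le> cnt \<beta> k t" using D kn by (simp add: Dle_def)
    have cs: "cnt (swp i j \<alpha>) k t = cnt \<alpha> k t +
      (if i < k \<and> k \<le> j then (if t \<le> \<alpha>!j then 1 else 0) - (if t \<le> \<alpha>!i then 1 else 0) else 0)"
      using ij jj by (intro cnt_swp) auto
    show "cnt (swp i j \<alpha>) k t \<le> cnt \<beta> k t"
    proof (cases "i < k \<and> k \<le> j \<and> t \<le> \<alpha>!j \<and> \<not> t \<le> \<alpha>!i")
      case False thus ?thesis using cs c0 by auto
    next
      case True
      hence kk: "i < k" "k \<le> j" "t \<le> \<alpha>!j" "\<alpha>!p < t" using ij by auto
      define u where "u = Suc (\<beta>!p)"
      have tu: "t < u" using kk jj by (simp add: u_def)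
      have pk: "p \<le> k" using kk ij by simp
      let ?F = "\<lambda>(s::nat) (\<gamma>::nat list) q. (if s \<le> \<gamma>!q then 1 else 0) :: int"
      have e1: "(\<Sum>q\<in>{p..<k}. ?F t \<alpha> q) = (\<Sum>q\<in>{p..<k}. ?F u \<alpha> q)"
      proof (rule sum.cong)
        fix q assume q: "q \<in> {p..<k}"
        show "?F t \<alpha> q = ?F u \<alpha> q"
        proof (cases "q = p")
          case True thus ?thesis using kk p by (auto simp: u_def)
        next
          case False
          hence "p < q" "q < j" using q kk by auto
          hence "\<not> (\<alpha>!p < \<alpha>!q \<and> \<alpha>!q \<le> \<beta>!p)" by (rule btw)
          thus ?thesis using kk jj by (auto simp: u_def)
        qed
      qed simp
      have pin: "p \<in> {p..<k}" using kk ij by auto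
      have e2: "(\<Sum>q\<in>{p..<k}. ?F u \<beta> q) + 1 \<le> (\<Sum>q\<in>{p..<k}. ?F t \<beta> q)"
      proof -
        have "(\<Sum>q\<in>{p..<k}. ?F u \<beta> q) = ?F u \<beta> p + (\<Sum>q\<in>{p..<k}-{p}. ?F u \<beta> q)"
          by (rule sum.remove[OF _ pin]) simp
        moreover have "(\<Sum>q\<in>{p..<k}. ?F t \<beta> q) = ?F t \<beta> p + (\<Sum>q\<in>{p..<k}-{p}. ?F t \<beta> q)"
          by (rule sum.remove[OF _ pin]) simp
        moreover have "(\<Sum>q\<in>{p..<k}-{p}. ?F u \<beta> q) \<le> (\<Sum>q\<in>{p..<k}-{p}. ?F t \<beta> q)"
          by (rule sum_mono) (use tu in auto)
        moreover have "?F u \<beta> p = 0" "?F t \<beta> p = 1" using kk jj by (auto simp: u_def)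
        ultimately show ?thesis by simp
      qed
      have cu: "cnt \<alpha> k u \<le> cnt \<beta> k u" using D kn by (simp add: Dle_def)
      have pp: "cnt \<beta> p s = cnt \<alpha> p s" for s by (rule cnt_cong) (use p in auto)
      have "cnt \<alpha> k t + 1 \<le> cnt \<beta> k t"
        using cnt_split[OF pk, of \<alpha> t] cnt_split[OF pk, of \<beta> t] cnt_split[OF pk, of \<alpha> u]
          cnt_split[OF pk, of \<beta> u] pp[of t] pp[of u] e1 e2 cu by linarith
      thus ?thesis using cs by auto
    qed
  qed
  show ?thesis using ij jj nb Dn by (intro exI[of _ i] exI[of _ j]) auto
qed

lemma Cset_sorted:
  assumes s: "sorted_wrt (\<ge>) \<alpha>" and b: "\<beta> \<in> Cset \<alpha>"
  shows "\<beta> = \<alpha>"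
proof (rule ccontr)
  assume "\<beta> \<noteq> \<alpha>"
  then obtain p q where "p < q" "q < length \<alpha>" "\<alpha>!q = \<beta>!p" "\<alpha>!p < \<beta>!p"
    using FD b unfolding Cset_def by blast
  moreover have "\<alpha>!q \<le> \<alpha>!p" using sorted_wrt_nth_less[OF s \<open>p < q\<close> \<open>q < length \<alpha>\<close>] by simp
  ultimately show False by simp
qed

lemma Cset_self: "\<alpha> \<in> Cset \<alpha>"
  by (simp add: Cset_def Dle_refl)

lemma cnt_swp_adj:
  assumes "Suc i < length \<gamma>"
  shows "cnt (swp i (Suc i) \<gamma>) k t = cnt \<gamma> k t +
    (if k = Suc i then (if t \<le> \<gamma>!Suc i then 1 else 0) - (if t \<le> \<gamma>!i then 1 else 0) else 0)"
proof -
  have "(i < k \<and> k \<le> Suc i) = (k = Suc i)" by auto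
  thus ?thesis using cnt_swp[of i "Suc i" \<gamma> k t] assms by simp
qed

lemma cnt_SS: "cnt \<gamma> (Suc (Suc i)) t = cnt \<gamma> i t + (if t \<le> \<gamma>!i then 1 else 0) + (if t \<le> \<gamma>!Suc i then 1 else 0)"
  by (simp add: cnt_Suc)

lemma P4a:
  assumes n: "Suc i < length \<alpha>" and a: "\<alpha>!i < \<alpha>!Suc i" and g: "\<gamma> \<in> Cset \<alpha>" and gi: "\<gamma>!Suc i \<le> \<gamma>!i"
  shows "\<gamma> \<in> Cset (swp i (Suc i) \<alpha>)"
proof -
  have len: "length \<gamma> = length \<alpha>" and ms: "mset \<gamma> = mset \<alpha>" and D: "Dle \<gamma> \<alpha>" using g by (auto simp: Cset_def)
  have "Dle \<gamma> (swp i (Suc i) \<alpha>)" unfolding Dle_def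
  proof (intro allI impI)
    fix k t assume "k \<le> length (swp i (Suc i) \<alpha>)"
    hence k: "k \<le> length \<alpha>" by simp
    show "cnt (swp i (Suc i) \<alpha>) k t \<le> cnt \<gamma> k t"
    proof (cases "k = Suc i")
      case False thus ?thesis using cnt_swp_adj[OF n] D k by (simp add: Dle_def)
    next
      case True
      have h1: "cnt \<alpha> i t \<le> cnt \<gamma> i t" using D n by (simp add: Dle_def)
      have h3: "cnt \<alpha> (Suc (Suc i)) t \<le> cnt \<gamma> (Suc (Suc i)) t" using D n by (simp add: Dle_def)
      show ?thesis using True h1 h3 cnt_swp_adj[OF n, of k t] a gi
        by (auto simp: cnt_Suc cnt_SS split: if_splits)
    qed
  qed
  thus ?thesis using len ms n by (simp add: Cset_def mset_swp)
qed

lemma P4b: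
  assumes n: "Suc i < length \<alpha>" and a: "\<alpha>!i < \<alpha>!Suc i" and g: "\<gamma> \<in> Cset \<alpha>" and gi: "\<gamma>!i < \<gamma>!Suc i"
  shows "swp i (Suc i) \<gamma> \<in> Cset (swp i (Suc i) \<alpha>)"
proof -
  have len: "length \<gamma> = length \<alpha>" and ms: "mset \<gamma> = mset \<alpha>" and D: "Dle \<gamma> \<alpha>" using g by (auto simp: Cset_def)
  have ng: "Suc i < length \<gamma>" using n len by simp
  have "Dle (swp i (Suc i) \<gamma>) (swp i (Suc i) \<alpha>)" unfolding Dle_def
  proof (intro allI impI)
    fix k t assume "k \<le> length (swp i (Suc i) \<alpha>)"
    hence k: "k \<le> length \<alpha>" by simp
    show "cnt (swp i (Suc i) \<alpha>) k t \<le> cnt (swp i (Suc i) \<gamma>) k t"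
    proof (cases "k = Suc i")
      case False thus ?thesis using cnt_swp_adj[OF n] cnt_swp_adj[OF ng] D k by (simp add: Dle_def)
    next
      case True
      have h1: "cnt \<alpha> i t \<le> cnt \<gamma> i t" using D n by (simp add: Dle_def)
      have h3: "cnt \<alpha> (Suc (Suc i)) t \<le> cnt \<gamma> (Suc (Suc i)) t" using D n by (simp add: Dle_def)
      show ?thesis using True h1 h3 cnt_swp_adj[OF n, of k t] cnt_swp_adj[OF ng, of k t] a gi
        by (auto simp: cnt_Suc cnt_SS split: if_splits)
    qed
  qed
  thus ?thesis using len ms n by (simp add: Cset_def mset_swp)
qed

lemma P2a:
  assumes n: "Suc i < length \<alpha>" and a: "\<alpha>!i < \<alpha>!Suc i" and b: "\<beta> \<in> Cset (swp i (Suc i) \<alpha>)"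
  shows "\<beta> \<in> Cset \<alpha>"
proof -
  have len: "length \<beta> = length \<alpha>" and ms: "mset \<beta> = mset \<alpha>" and D: "Dle \<beta> (swp i (Suc i) \<alpha>)"
    using b n by (auto simp: Cset_def mset_swp)
  have "Dle \<beta> \<alpha>" unfolding Dle_def
  proof (intro allI impI)
    fix k t assume k: "k \<le> length \<alpha>"
    have "cnt (swp i (Suc i) \<alpha>) k t \<le> cnt \<beta> k t" using D k by (simp add: Dle_def)
    thus "cnt \<alpha> k t \<le> cnt \<beta> k t" using cnt_swp_adj[OF n, of k t] a by (auto split: if_splits)
  qed
  thus ?thesis using len ms by (simp add: Cset_def)
qed

lemma P2b:
  assumes n: "Suc i < length \<alpha>" and a: "\<alpha>!i < \<alpha>!Suc i" and b: "\<beta> \<in> Cset (swp i (Suc i) \<alpha>)"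
  shows "swp i (Suc i) \<beta> \<in> Cset \<alpha>"
proof -
  have len: "length \<beta> = length \<alpha>" and ms: "mset \<beta> = mset \<alpha>" and D: "Dle \<beta> (swp i (Suc i) \<alpha>)"
    using b n by (auto simp: Cset_def mset_swp)
  have ng: "Suc i < length \<beta>" using n len by simp
  have D2: "Dle \<beta> \<alpha>" using P2a[OF assms] by (simp add: Cset_def)
  have "Dle (swp i (Suc i) \<beta>) \<alpha>" unfolding Dle_def
  proof (intro allI impI)
    fix k t assume k: "k \<le> length \<alpha>"
    show "cnt \<alpha> k t \<le> cnt (swp i (Suc i) \<beta>) k t"
    proof (cases "k = Suc i")
      case False thus ?thesis using cnt_swp_adj[OF ng] D2 k by (simp add: Dle_def)
    next
      case True
      have h1: "cnt (swp i (Suc i) \<alpha>) i t \<le> cnt \<beta> i t" using D n by (simp add: Dle_def)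
      have h3: "cnt (swp i (Suc i) \<alpha>) (Suc (Suc i)) t \<le> cnt \<beta> (Suc (Suc i)) t" using D n by (simp add: Dle_def)
      show ?thesis using True h1 h3 cnt_swp_adj[OF n, of i t] cnt_swp_adj[OF n, of "Suc (Suc i)" t]
          cnt_swp_adj[OF ng, of k t] a
        by (auto simp: cnt_Suc cnt_SS split: if_splits)
    qed
  qed
  thus ?thesis using len ms ng by (simp add: Cset_def mset_swp)
qed

lemma chain_Dle:
  assumes ch: "(bruhat_cover n)\<^sup>*\<^sup>* u v" and ui: "u ` {..<n} \<subseteq> {..<n}" and ln: "length lm = n"
    and dec: "\<And>a b. a \<le> b \<Longrightarrow> b < n \<Longrightarrow> lm!b \<le> lm!a"
  shows "Dle (act lm u) (act lm v) \<and> v ` {..<n} \<subseteq> {..<n}"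
  using ch
proof (induction rule: rtranclp_induct)
  case base thus ?case using ui by (simp add: Dle_refl)
next
  case (step v v')
  from step.hyps(2) obtain i j where ij: "i < j" "j < n" and v': "v' = v \<circ> Transposition.transpose i j"
    and pl: "perm_length n v < perm_length n v'"
    unfolding bruhat_cover_def by blast
  have vi: "v ` {..<n} \<subseteq> {..<n}" using step.IH by simp
  have "v i \<le> v j"
  proof (rule ccontr)
    assume "\<not> v i \<le> v j"
    hence "v' i < v' j" using v' by simp
    hence "perm_length n v' < perm_length n (v' \<circ> Transposition.transpose i j)"
      using ij by (intro length_swap_up) auto
    moreover have "v' \<circ> Transposition.transpose i j = v" using v' by (simp add: comp_tr_tr)
    ultimately show False using pl by simp
  qed
  moreover have "v j < n" using vi ij by auto
  ultimately have le: "lm ! v j \<le> lm ! v i" using dec by simp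
  have av: "act lm v' = swp i j (act lm v)" using v' ij ln by (simp add: act_comp_tr)
  have "Dle (act lm v) (act lm v')" unfolding av
    using ij ln le by (intro Dle_swp_down) (auto simp: nth_act)
  hence "Dle (act lm u) (act lm v')" using step.IH Dle_trans ln by (metis length_act)
  moreover have "v' ` {..<n} \<subseteq> {..<n}"
  proof
    fix y assume "y \<in> v' ` {..<n}"
    then obtain x where x: "x < n" "y = v (Transposition.transpose i j x)" using v' by auto
    have "Transposition.transpose i j x < n" using x ij by (auto simp: Transposition.transpose_def)
    thus "y \<in> {..<n}" using x vi by auto
  qed
  ultimately show ?case by simp
qed

lemma CH: "\<beta> \<in> Cset \<alpha> \<Longrightarrow> (bruhat_cover (length \<alpha>))\<^sup>*\<^sup>* (wperm \<beta>) (wperm \<alpha>)"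
proof (induction "perm_length (length \<alpha>) (wperm \<alpha>)" arbitrary: \<alpha> rule: less_induct)
  case less
  show ?case
  proof (cases "\<beta> = \<alpha>")
    case True thus ?thesis by simp
  next
    case False
    have len: "length \<beta> = length \<alpha>" and ms: "mset \<beta> = mset \<alpha>" and D: "Dle \<beta> \<alpha>"
      using less.prems by (auto simp: Cset_def)
    obtain i j where ij: "i < j" "j < length \<alpha>" "\<alpha>!i < \<alpha>!j"
      and nb: "\<forall>m. i < m \<and> m < j \<longrightarrow> \<alpha>!m \<noteq> \<alpha>!i \<and> \<alpha>!m \<noteq> \<alpha>!j" and D': "Dle \<beta> (swp i j \<alpha>)"
      using CL[OF len ms D False] by blast
    define \<alpha>' where "\<alpha>' = swp i j \<alpha>"
    have sw: "wperm \<alpha> = wperm \<alpha>' \<circ> Transposition.transpose i j"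
      "perm_length (length \<alpha>) (wperm \<alpha>') < perm_length (length \<alpha>) (wperm \<alpha>)"
      using SW[OF ij nb] by (auto simp: \<alpha>'_def)
    have l': "length \<alpha>' = length \<alpha>" by (simp add: \<alpha>'_def)
    have "\<beta> \<in> Cset \<alpha>'" using len ms D' ij by (simp add: Cset_def \<alpha>'_def mset_swp)
    hence IH: "(bruhat_cover (length \<alpha>))\<^sup>*\<^sup>* (wperm \<beta>) (wperm \<alpha>')"
      using less.hyps[of \<alpha>'] sw(2) l' by simp
    have "bruhat_cover (length \<alpha>) (wperm \<alpha>') (wperm \<alpha>)"
      unfolding bruhat_cover_def using ij sw by blast
    thus ?thesis using IH by simp
  qed
qed

lemma comp_le_iff: "comp_le \<beta> \<alpha> \<longleftrightarrow> \<beta> \<in> Cset \<alpha>"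
proof
  assume c: "comp_le \<beta> \<alpha>"
  hence len: "length \<beta> = length \<alpha>" and lm: "lam \<beta> = lam \<alpha>"
    and bl: "bruhat_le (length \<alpha>) (wperm \<beta>) (wperm \<alpha>)" by (auto simp: comp_le_def)
  have ms: "mset \<beta> = mset \<alpha>" using lm by (simp add: lam_eq_iff)
  have pb: "wperm \<beta> permutes {..<length \<alpha>}" and ch: "(bruhat_cover (length \<alpha>))\<^sup>*\<^sup>* (wperm \<beta>) (wperm \<alpha>)"
    using bl by (auto simp: bruhat_le_def)
  have ui: "wperm \<beta> ` {..<length \<alpha>} \<subseteq> {..<length \<alpha>}" using permutes_image[OF pb] by simp
  have "Dle (act (lam \<alpha>) (wperm \<beta>)) (act (lam \<alpha>) (wperm \<alpha>))"
    using chain_Dle[OF ch ui, of "lam \<alpha>"] lam_dec by auto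
  moreover have "act (lam \<alpha>) (wperm \<alpha>) = \<alpha>" using wperm_props[of \<alpha>] by (simp add: cand_def)
  moreover have "act (lam \<alpha>) (wperm \<beta>) = \<beta>" using wperm_props[of \<beta>] lm by (simp add: cand_def)
  ultimately show "\<beta> \<in> Cset \<alpha>" using len ms by (simp add: Cset_def)
next
  assume b: "\<beta> \<in> Cset \<alpha>"
  hence len: "length \<beta> = length \<alpha>" and ms: "mset \<beta> = mset \<alpha>" by (auto simp: Cset_def)
  have "wperm \<beta> permutes {..<length \<alpha>}" "wperm \<alpha> permutes {..<length \<alpha>}"
    using wperm_props[of \<beta>] wperm_props[of \<alpha>] len by (auto simp: cand_def)
  thus "comp_le \<beta> \<alpha>" using CH[OF b] len ms
    by (simp add: comp_le_def bruhat_le_def lam_eq_iff)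
qed

lemma finite_Cset: "finite (Cset \<alpha>)"
proof -
  have "Cset \<alpha> \<subseteq> {xs. set xs \<subseteq> set \<alpha> \<and> length xs = length \<alpha>}"
    by (auto simp: Cset_def dest: arg_cong[where f = set_mset] simp flip: set_mset_mset)
  thus ?thesis by (rule finite_subset) (simp add: finite_lists_length_eq)
qed



abbreviation mono :: "(nat \<Rightarrow>\<^sub>0 nat) \<Rightarrow> mpoly" where "mono m \<equiv> Poly_Mapping.single m 1"

lemma lookup_smult: "Poly_Mapping.lookup (Poly_Mapping.single 0 c * (p::mpoly)) k = c * Poly_Mapping.lookup p k"
  by (simp add: mult_map_scale_conv_mult[symmetric] map.rep_eq when_def)

lemma poly_expand: "(\<Sum>m\<in>Poly_Mapping.keys p. Poly_Mapping.single m (Poly_Mapping.lookup p m)) = (p::mpoly)"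
proof (rule poly_mapping_eqI)
  fix k
  have "Poly_Mapping.lookup (\<Sum>m\<in>Poly_Mapping.keys p. Poly_Mapping.single m (Poly_Mapping.lookup p m)) k = (\<Sum>m\<in>Poly_Mapping.keys p. if m = k then Poly_Mapping.lookup p m else 0)"
    by (simp add: lookup_sum lookup_single when_def)
  also have "\<dots> = Poly_Mapping.lookup p k" by (simp add: sum.delta in_keys_iff)
  finally show "Poly_Mapping.lookup (\<Sum>m\<in>Poly_Mapping.keys p. Poly_Mapping.single m (Poly_Mapping.lookup p m)) k = Poly_Mapping.lookup p k" .
qed

lemma single_smult: "Poly_Mapping.single m c = Poly_Mapping.single 0 c * (mono m :: mpoly)"
  by (simp add: mult_single)

lemma inj_tr: "inj (Transposition.transpose a b)"
  by (rule injI) (rule transpose_eq_imp_eq)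

lemma lookup_swap_exp: "Poly_Mapping.lookup (swap_exp i m) k = Poly_Mapping.lookup m (Transposition.transpose i (Suc i) k)"
  by (simp add: swap_exp_def map_key.rep_eq[OF inj_tr])

lemma swap_exp_swap_exp[simp]: "swap_exp i (swap_exp i m) = m"
  by (rule poly_mapping_eqI) (simp add: lookup_swap_exp transpose_involutory)

lemma inj_swap_exp: "inj (swap_exp i)"
  by (metis injI swap_exp_swap_exp)

lemma swap_exp_add: "swap_exp i (m + m') = swap_exp i m + swap_exp i m'"
  by (rule poly_mapping_eqI) (simp add: lookup_swap_exp lookup_add)

lemma swap_exp_single: "swap_exp i (Poly_Mapping.single j a) = Poly_Mapping.single (Transposition.transpose i (Suc i) j) a"
proof (rule poly_mapping_eqI)
  fix k
  have "(j = Transposition.transpose i (Suc i) k) = (Transposition.transpose i (Suc i) j = k)"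
    by (metis transpose_involutory)
  thus "Poly_Mapping.lookup (swap_exp i (Poly_Mapping.single j a)) k = Poly_Mapping.lookup (Poly_Mapping.single (Transposition.transpose i (Suc i) j) a) k"
    by (simp add: lookup_swap_exp lookup_single when_def)
qed

lemma lookup_swapvar: "Poly_Mapping.lookup (swapvar i f) m = Poly_Mapping.lookup f (swap_exp i m)"
  by (simp add: swapvar_def map_key.rep_eq[OF inj_swap_exp])

lemma swapvar_single: "swapvar i (Poly_Mapping.single m c) = Poly_Mapping.single (swap_exp i m) c"
proof (rule poly_mapping_eqI)
  fix k
  have "(m = swap_exp i k) = (swap_exp i m = k)" by (metis swap_exp_swap_exp)
  thus "Poly_Mapping.lookup (swapvar i (Poly_Mapping.single m c)) k = Poly_Mapping.lookup (Poly_Mapping.single (swap_exp i m) c) k"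
    by (simp add: lookup_swapvar lookup_single when_def)
qed

lemma swapvar_add: "swapvar i (f + g) = swapvar i f + swapvar i g"
  by (rule poly_mapping_eqI) (simp add: lookup_swapvar lookup_add)

lemma swapvar_diff: "swapvar i (f - g) = swapvar i f - swapvar i g"
  by (rule poly_mapping_eqI) (simp add: lookup_swapvar lookup_minus)

lemma swapvar_sum: "swapvar i (sum F A) = (\<Sum>x\<in>A. swapvar i (F x))"
  by (rule poly_mapping_eqI) (simp add: lookup_swapvar lookup_sum)

lemma swapvar_swapvar[simp]: "swapvar i (swapvar i f) = f"
  by (rule poly_mapping_eqI) (simp add: lookup_swapvar)

lemma swapvar_expand: "swapvar i f = (\<Sum>m\<in>Poly_Mapping.keys f. Poly_Mapping.single (swap_exp i m) (Poly_Mapping.lookup f m))"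
proof -
  have "swapvar i f = swapvar i (\<Sum>m\<in>Poly_Mapping.keys f. Poly_Mapping.single m (Poly_Mapping.lookup f m))" by (simp add: poly_expand)
  thus ?thesis by (simp add: swapvar_sum swapvar_single)
qed

lemma mult_expand: "(f::mpoly) * g = (\<Sum>a\<in>Poly_Mapping.keys f. \<Sum>b\<in>Poly_Mapping.keys g. Poly_Mapping.single (a + b) (Poly_Mapping.lookup f a * Poly_Mapping.lookup g b))"
proof -
  have "f * g = (\<Sum>a\<in>Poly_Mapping.keys f. Poly_Mapping.single a (Poly_Mapping.lookup f a)) * (\<Sum>b\<in>Poly_Mapping.keys g. Poly_Mapping.single b (Poly_Mapping.lookup g b))"
    by (simp add: poly_expand)
  thus ?thesis by (simp add: sum_product mult_single)
qed

lemma swapvar_mult: "swapvar i (f * g) = swapvar i f * swapvar i g"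
proof -
  have "swapvar i (f * g) = (\<Sum>a\<in>Poly_Mapping.keys f. \<Sum>b\<in>Poly_Mapping.keys g. Poly_Mapping.single (swap_exp i a + swap_exp i b) (Poly_Mapping.lookup f a * Poly_Mapping.lookup g b))"
    by (simp add: mult_expand swapvar_sum swapvar_single swap_exp_add)
  also have "\<dots> = (\<Sum>a\<in>Poly_Mapping.keys f. Poly_Mapping.single (swap_exp i a) (Poly_Mapping.lookup f a)) * (\<Sum>b\<in>Poly_Mapping.keys g. Poly_Mapping.single (swap_exp i b) (Poly_Mapping.lookup g b))"
    by (simp add: sum_product mult_single)
  also have "\<dots> = swapvar i f * swapvar i g" by (simp add: swapvar_expand)
  finally show ?thesis .
qed

lemma swapvar_var: "swapvar i (var j) = var (Transposition.transpose i (Suc i) j)"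
  by (simp add: var_def swapvar_single swap_exp_single)

lemma swapvar_var_i[simp]: "swapvar i (var i) = var (Suc i)"
  and swapvar_var_Si[simp]: "swapvar i (var (Suc i)) = var i"
  by (simp_all add: swapvar_var)

lemma var_pow: "var j ^ k = Poly_Mapping.single (Poly_Mapping.single j k) 1"
proof (induction k)
  case 0 thus ?case by simp
next
  case (Suc k)
  have "Poly_Mapping.single j (Suc k) = Poly_Mapping.single j 1 + Poly_Mapping.single j k"
    by (simp add: single_add[symmetric])
  thus ?case using Suc by (simp add: var_def mult_single)
qed

lemma var_diff_ne: "i \<noteq> j \<Longrightarrow> var i - var j \<noteq> (0::mpoly)"
proof
  assume ij: "i \<noteq> j" and z: "var i - var j = (0::mpoly)"
  have "Poly_Mapping.single j (1::nat) \<noteq> Poly_Mapping.single i 1"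
    by (metis ij lookup_single_eq lookup_single_not_eq zero_neq_one)
  hence "Poly_Mapping.lookup (var i - var j) (Poly_Mapping.single i 1) = (1::real)"
    by (simp add: var_def lookup_minus lookup_single when_def)
  thus False using z by simp
qed

section \<open>telescoping\<close>

lemma tele:
  fixes x y :: "'a::comm_ring_1"
  assumes "b \<le> a"
  shows "(x - y) * (\<Sum>k\<in>{b..a}. x^k * y^(a+b-k)) = x^(Suc a) * y^b - x^b * y^(Suc a)"
  using assms
proof (induction a rule: dec_induct)
  case base thus ?case by (simp add: algebra_simps)
next
  case (step n)
  have "(\<Sum>k\<in>{b..n}. x^k * y^(Suc n + b - k)) = y * (\<Sum>k\<in>{b..n}. x^k * y^(n + b - k))"
    unfolding sum_distrib_left
  proof (rule sum.cong)
    fix k assume "k \<in> {b..n}"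
    hence "Suc n + b - k = Suc (n + b - k)" by auto
    thus "x^k * y^(Suc n + b - k) = y * (x^k * y^(n + b - k))" by (simp add: algebra_simps)
  qed simp
  moreover have "(\<Sum>k\<in>{b..Suc n}. x^k * y^(Suc n + b - k)) = (\<Sum>k\<in>{b..n}. x^k * y^(Suc n + b - k)) + x^(Suc n) * y^b"
    using step by (simp add: sum.cl_ivl_Suc)
  ultimately have "(x - y) * (\<Sum>k\<in>{b..Suc n}. x^k * y^(Suc n + b - k)) =
      y * ((x - y) * (\<Sum>k\<in>{b..n}. x^k * y^(n + b - k))) + (x - y) * x^(Suc n) * y^b"
    by (simp add: algebra_simps)
  also have "\<dots> = y * (x^(Suc n) * y^b - x^b * y^(Suc n)) + (x - y) * x^(Suc n) * y^b"
    using step by simp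
  also have "\<dots> = x^(Suc (Suc n)) * y^b - x^b * y^(Suc (Suc n))"
    by (simp add: algebra_simps)
  finally show ?case .
qed

lemma tele2:
  fixes x y :: "'a::comm_ring_1"
  assumes "a < b"
  shows "(x - y) * (\<Sum>k\<in>{a<..<b}. x^k * y^(a+b-k)) = x^b * y^(Suc a) - x^(Suc a) * y^b"
proof (cases "b = Suc a")
  case True
  hence "{a<..<b} = {}" by auto
  thus ?thesis using True by simp
next
  case False
  hence le: "Suc a \<le> b - 1" using assms by simp
  have I: "{a<..<b} = {Suc a..b-1}" using assms by auto
  have "(x - y) * (\<Sum>k\<in>{Suc a..b-1}. x^k * y^((b-1) + Suc a - k)) = x^(Suc (b-1)) * y^(Suc a) - x^(Suc a) * y^(Suc (b-1))"
    by (rule tele[OF le])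
  moreover have "(b-1) + Suc a = a + b" "Suc (b-1) = b" using assms by auto
  ultimately show ?thesis by (simp add: I add.commute)
qed

lemma tele_both:
  fixes x y :: "'a::comm_ring_1"
  shows "(x - y) * ((\<Sum>k\<in>{b..a}. x^k * y^(a+b-k)) - (\<Sum>k\<in>{a<..<b}. x^k * y^(a+b-k)))
     = x * (x^a * y^b) - y * (x^b * y^a)"
proof (cases "b \<le> a")
  case True
  hence "{a<..<b} = {}" by auto
  thus ?thesis using tele[OF True, of x y] by (simp add: algebra_simps)
next
  case False
  hence "{b..a} = {}" "a < b" by auto
  thus ?thesis using tele2[of a b x y] by (simp add: algebra_simps)
qed

section \<open>explicit Demazure operator\<close>

definition Eexp :: "nat \<Rightarrow> (nat \<Rightarrow>\<^sub>0 nat) \<Rightarrow> nat \<Rightarrow> (nat \<Rightarrow>\<^sub>0 nat)" where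
  "Eexp i m k = Poly_Mapping.update i k (Poly_Mapping.update (Suc i) (Poly_Mapping.lookup m i + Poly_Mapping.lookup m (Suc i) - k) m)"

lemma lookup_Eexp: "Poly_Mapping.lookup (Eexp i m k) x =
   (if x = i then k else if x = Suc i then Poly_Mapping.lookup m i + Poly_Mapping.lookup m (Suc i) - k else Poly_Mapping.lookup m x)"
  by (simp add: Eexp_def lookup_update)

lemma Eexp_a: "Eexp i m (Poly_Mapping.lookup m i) = m"
  by (rule poly_mapping_eqI) (simp add: lookup_Eexp)

lemma Eexp_b: "Eexp i m (Poly_Mapping.lookup m (Suc i)) = swap_exp i m"
  by (rule poly_mapping_eqI) (simp add: lookup_Eexp lookup_swap_exp Transposition.transpose_def)

lemma Eexp_inj: "Eexp i m k = Eexp i m k' \<longleftrightarrow> k = k'"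
  by (metis lookup_Eexp)

definition Gp :: "nat \<Rightarrow> (nat \<Rightarrow>\<^sub>0 nat) \<Rightarrow> mpoly" where
  "Gp i m = (\<Sum>k\<in>{Poly_Mapping.lookup m (Suc i)..Poly_Mapping.lookup m i}. mono (Eexp i m k))
          - (\<Sum>k\<in>{Poly_Mapping.lookup m i<..<Poly_Mapping.lookup m (Suc i)}. mono (Eexp i m k))"

lemma mono_Eexp:
  assumes "k \<le> Poly_Mapping.lookup m i + Poly_Mapping.lookup m (Suc i)"
  shows "mono (Eexp i m k) = mono (Poly_Mapping.update i 0 (Poly_Mapping.update (Suc i) 0 m)) *
     (var i ^ k * var (Suc i) ^ (Poly_Mapping.lookup m i + Poly_Mapping.lookup m (Suc i) - k))"
proof -
  let ?m0 = "Poly_Mapping.update i 0 (Poly_Mapping.update (Suc i) 0 m)"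
  have "Eexp i m k = ?m0 + (Poly_Mapping.single i k + Poly_Mapping.single (Suc i) (Poly_Mapping.lookup m i + Poly_Mapping.lookup m (Suc i) - k))"
    by (rule poly_mapping_eqI) (simp add: lookup_Eexp lookup_update lookup_add lookup_single when_def)
  thus ?thesis by (simp add: var_pow mult_single)
qed

lemma G1: "(var i - var (Suc i)) * Gp i m = var i * mono m - var (Suc i) * mono (swap_exp i m)"
proof -
  define a where "a = Poly_Mapping.lookup m i"
  define b where "b = Poly_Mapping.lookup m (Suc i)"
  define m0 where "m0 = Poly_Mapping.update i 0 (Poly_Mapping.update (Suc i) 0 m)"
  define X where "X = var i"
  define Y where "Y = var (Suc i)"
  have me: "mono (Eexp i m k) = mono m0 * (X ^ k * Y ^ (a + b - k))" if "k \<le> a + b" for k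
    using mono_Eexp[of k m i] that by (simp add: a_def b_def m0_def X_def Y_def)
  have s1: "(\<Sum>k\<in>{b..a}. mono (Eexp i m k)) = mono m0 * (\<Sum>k\<in>{b..a}. X ^ k * Y ^ (a + b - k))"
    unfolding sum_distrib_left by (rule sum.cong) (auto simp: me)
  have s2: "(\<Sum>k\<in>{a<..<b}. mono (Eexp i m k)) = mono m0 * (\<Sum>k\<in>{a<..<b}. X ^ k * Y ^ (a + b - k))"
    unfolding sum_distrib_left by (rule sum.cong) (auto simp: me)
  have G: "Gp i m = mono m0 * ((\<Sum>k\<in>{b..a}. X ^ k * Y ^ (a + b - k)) - (\<Sum>k\<in>{a<..<b}. X ^ k * Y ^ (a + b - k)))"
    unfolding Gp_def a_def[symmetric] b_def[symmetric] s1 s2 by (simp add: algebra_simps)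
  have mm: "mono m = mono m0 * (X ^ a * Y ^ b)" using me[of a] Eexp_a[of i m] by (simp add: a_def)
  have ms: "mono (swap_exp i m) = mono m0 * (X ^ b * Y ^ a)" using me[of b] Eexp_b[of i m] by (simp add: b_def)
  have "(X - Y) * Gp i m = mono m0 * ((X - Y) * ((\<Sum>k\<in>{b..a}. X ^ k * Y ^ (a + b - k)) - (\<Sum>k\<in>{a<..<b}. X ^ k * Y ^ (a + b - k))))"
    unfolding G by (simp add: algebra_simps)
  also have "\<dots> = mono m0 * (X * (X ^ a * Y ^ b) - Y * (X ^ b * Y ^ a))" by (simp only: tele_both)
  also have "\<dots> = X * mono m - Y * mono (swap_exp i m)" unfolding mm ms by (simp add: algebra_simps)
  finally show ?thesis by (simp add: X_def Y_def)
qed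

lemma lookup_Gp: "Poly_Mapping.lookup (Gp i m) \<gamma> =
   (\<Sum>k\<in>{Poly_Mapping.lookup m (Suc i)..Poly_Mapping.lookup m i}. if Eexp i m k = \<gamma> then 1 else 0)
 - (\<Sum>k\<in>{Poly_Mapping.lookup m i<..<Poly_Mapping.lookup m (Suc i)}. if Eexp i m k = \<gamma> then 1 else 0)"
  by (simp add: Gp_def lookup_minus lookup_sum lookup_single when_def)

lemma G2: "Poly_Mapping.lookup (Gp i m) \<gamma> \<noteq> 0 \<Longrightarrow>
   \<exists>k. (Poly_Mapping.lookup m (Suc i) \<le> k \<and> k \<le> Poly_Mapping.lookup m i \<or> Poly_Mapping.lookup m i < k \<and> k < Poly_Mapping.lookup m (Suc i)) \<and> \<gamma> = Eexp i m k"
proof (rule ccontr)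
  assume nz: "Poly_Mapping.lookup (Gp i m) \<gamma> \<noteq> 0" and
    no: "\<not> (\<exists>k. (Poly_Mapping.lookup m (Suc i) \<le> k \<and> k \<le> Poly_Mapping.lookup m i \<or> Poly_Mapping.lookup m i < k \<and> k < Poly_Mapping.lookup m (Suc i)) \<and> \<gamma> = Eexp i m k)"
  have "(\<Sum>k\<in>{Poly_Mapping.lookup m (Suc i)..Poly_Mapping.lookup m i}. if Eexp i m k = \<gamma> then 1 else 0) = (0::real)"
    by (rule sum.neutral) (use no in auto)
  moreover have "(\<Sum>k\<in>{Poly_Mapping.lookup m i<..<Poly_Mapping.lookup m (Suc i)}. if Eexp i m k = \<gamma> then 1 else 0) = (0::real)"
    by (rule sum.neutral) (use no in auto)
  ultimately show False using nz by (simp add: lookup_Gp)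
qed

lemma G3: "Poly_Mapping.lookup (Gp i m) m = (if Poly_Mapping.lookup m (Suc i) \<le> Poly_Mapping.lookup m i then 1 else 0)"
proof -
  have e: "(Eexp i m k = m) = (k = Poly_Mapping.lookup m i)" for k
    by (metis Eexp_a Eexp_inj)
  show ?thesis by (simp add: lookup_Gp e sum.delta)
qed

lemma G4: "Poly_Mapping.lookup (Gp i m) (swap_exp i m) = (if Poly_Mapping.lookup m (Suc i) \<le> Poly_Mapping.lookup m i then 1 else 0)"
proof -
  have e: "(Eexp i m k = swap_exp i m) = (k = Poly_Mapping.lookup m (Suc i))" for k
    by (metis Eexp_b Eexp_inj)
  show ?thesis by (simp add: lookup_Gp e sum.delta)
qed

definition PI :: "nat \<Rightarrow> mpoly \<Rightarrow> mpoly" where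
  "PI i f = (\<Sum>m\<in>Poly_Mapping.keys f. Poly_Mapping.single 0 (Poly_Mapping.lookup f m) * Gp i m)"

lemma PI_eq: "(var i - var (Suc i)) * PI i f = var i * f - swapvar i (var i * f)"
proof -
  have f: "f = (\<Sum>m\<in>Poly_Mapping.keys f. Poly_Mapping.single 0 (Poly_Mapping.lookup f m) * mono m)"
    using poly_expand[of f] by (simp add: single_smult[symmetric])
  have sf: "swapvar i f = (\<Sum>m\<in>Poly_Mapping.keys f. Poly_Mapping.single 0 (Poly_Mapping.lookup f m) * mono (swap_exp i m))"
    using swapvar_expand[of i f] by (simp add: single_smult[symmetric])
  have "var i * f - swapvar i (var i * f) = var i * f - var (Suc i) * swapvar i f"
    by (simp add: swapvar_mult)
  also have "\<dots> = (\<Sum>m\<in>Poly_Mapping.keys f. Poly_Mapping.single 0 (Poly_Mapping.lookup f m) * (var i * mono m - var (Suc i) * mono (swap_exp i m)))"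
    apply (subst (1) f, subst sf)
    by (simp add: sum_distrib_left sum_subtractf[symmetric] algebra_simps)
  also have "\<dots> = (\<Sum>m\<in>Poly_Mapping.keys f. (var i - var (Suc i)) * (Poly_Mapping.single 0 (Poly_Mapping.lookup f m) * Gp i m))"
  proof (rule sum.cong)
    fix m
    show "Poly_Mapping.single 0 (Poly_Mapping.lookup f m) * (var i * mono m - var (Suc i) * mono (swap_exp i m)) =
        (var i - var (Suc i)) * (Poly_Mapping.single 0 (Poly_Mapping.lookup f m) * Gp i m)"
      by (metis G1 mult.left_commute)
  qed simp
  also have "\<dots> = (var i - var (Suc i)) * PI i f" by (simp add: PI_def sum_distrib_left)
  finally show ?thesis by simp
qed

lemma demazure_PI: "demazure i f = PI i f"
  unfolding demazure_def divdiff_def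
proof (rule the_equality)
  show "(var i - var (Suc i)) * PI i f = var i * f - swapvar i (var i * f)" by (rule PI_eq)
next
  fix g assume "(var i - var (Suc i)) * g = var i * f - swapvar i (var i * f)"
  hence "(var i - var (Suc i)) * g = (var i - var (Suc i)) * PI i f" using PI_eq by simp
  thus "g = PI i f" using var_diff_ne[of i "Suc i"] by simp
qed

lemma demazure_eq: "(var i - var (Suc i)) * demazure i f = var i * f - var (Suc i) * swapvar i f"
  using PI_eq[of i f] by (simp add: demazure_PI swapvar_mult)

lemma lookup_PI: "Poly_Mapping.lookup (PI i f) \<gamma> = (\<Sum>m\<in>Poly_Mapping.keys f. Poly_Mapping.lookup f m * Poly_Mapping.lookup (Gp i m) \<gamma>)"
  by (simp add: PI_def lookup_sum lookup_smult)

lemma keys_PI: "\<gamma> \<in> Poly_Mapping.keys (PI i f) \<Longrightarrow> \<exists>m\<in>Poly_Mapping.keys f. Poly_Mapping.lookup (Gp i m) \<gamma> \<noteq> 0"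
proof (rule ccontr)
  assume "\<gamma> \<in> Poly_Mapping.keys (PI i f)" "\<not> (\<exists>m\<in>Poly_Mapping.keys f. Poly_Mapping.lookup (Gp i m) \<gamma> \<noteq> 0)"
  thus False by (simp add: in_keys_iff lookup_PI)
qed



lemma swapvar_var_other: "j \<noteq> i \<Longrightarrow> j \<noteq> Suc i \<Longrightarrow> swapvar i (var j) = var j"
  by (simp add: swapvar_var Transposition.transpose_def)

lemma swapvar_neg: "swapvar i (- f) = - swapvar i f"
  by (rule poly_mapping_eqI) (simp add: lookup_swapvar)

lemma swapvar_comp: "swapvar i (swapvar j f) = Poly_Mapping.map_key (\<lambda>m. swap_exp j (swap_exp i m)) f"
  by (rule poly_mapping_eqI) (simp add: lookup_swapvar map_key.rep_eq inj_swap_exp inj_compose[of "swap_exp j" "swap_exp i", unfolded o_def])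

lemma swapvar_comm_eq:
  assumes "\<And>m. swap_exp j (swap_exp i m) = swap_exp i (swap_exp j m)"
  shows "swapvar i (swapvar j f) = swapvar j (swapvar i f)"
  by (rule poly_mapping_eqI) (simp add: lookup_swapvar assms)

lemma swap_exp_comm: "Suc i < j \<Longrightarrow> swap_exp j (swap_exp i m) = swap_exp i (swap_exp j m)"
  by (rule poly_mapping_eqI) (auto simp: lookup_swap_exp Transposition.transpose_def)

lemma swap_exp_braid: "swap_exp i (swap_exp (Suc i) (swap_exp i m)) = swap_exp (Suc i) (swap_exp i (swap_exp (Suc i) m))"
  by (rule poly_mapping_eqI) (auto simp: lookup_swap_exp Transposition.transpose_def)

lemma swapvar_braid: "swapvar i (swapvar (Suc i) (swapvar i f)) = swapvar (Suc i) (swapvar i (swapvar (Suc i) f))"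
  by (rule poly_mapping_eqI) (simp add: lookup_swapvar swap_exp_braid)

lemma D_eq: "(var i - var (Suc i)) * demazure i f = var i * f - var (Suc i) * swapvar i f"
  by (rule demazure_eq)

lemma cancel_nz: "(c::mpoly) \<noteq> 0 \<Longrightarrow> c * x = c * y \<Longrightarrow> x = y"
  by simp

lemma D_sym: "swapvar i (demazure i f) = demazure i f"
proof -
  let ?a = "var i :: mpoly" and ?b = "var (Suc i) :: mpoly"
  have e: "(?a - ?b) * demazure i f = ?a * f - ?b * swapvar i f" by (rule D_eq)
  have "swapvar i ((?a - ?b) * demazure i f) = swapvar i (?a * f - ?b * swapvar i f)" using e by simp
  hence h1: "(?b - ?a) * swapvar i (demazure i f) = ?b * swapvar i f - ?a * f"
    by (simp add: swapvar_mult swapvar_diff)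
  have h2: "(?b - ?a) * swapvar i (demazure i f) = - ((?a - ?b) * swapvar i (demazure i f))"
    by (simp add: algebra_simps)
  have h3: "?b * swapvar i f - ?a * f = - (?a * f - ?b * swapvar i f)" by simp
  have "- ((?a - ?b) * swapvar i (demazure i f)) = - (?a * f - ?b * swapvar i f)"
    using h1 h2 h3 by metis
  hence "(?a - ?b) * swapvar i (demazure i f) = ?a * f - ?b * swapvar i f"
    by (simp only: neg_equal_iff_equal)
  hence "(?a - ?b) * swapvar i (demazure i f) = (?a - ?b) * demazure i f"
    using e by simp
  thus ?thesis using var_diff_ne[of i "Suc i"] by simp
qed

lemma D_comm:
  assumes ij: "Suc i < j"
  shows "demazure i (demazure j f) = demazure j (demazure i f)"
proof -
  define a where "a = (var i :: mpoly)"
  define b where "b = (var (Suc i) :: mpoly)"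
  define c where "c = (var j :: mpoly)"
  define d where "d = (var (Suc j) :: mpoly)"
  let ?s = "swapvar i" and ?t = "swapvar j"
  have sc: "?s c = c" "?s d = d" using ij by (simp_all add: c_def d_def swapvar_var_other)
  have ta: "?t a = a" "?t b = b" using ij by (simp_all add: a_def b_def swapvar_var_other)
  have st: "?s (?t f) = ?t (?s f)" using swapvar_comm_eq[of j i f] swap_exp_comm[OF ij] by metis
  define g1 where "g1 = demazure j f"
  define g2 where "g2 = demazure i g1"
  define h1 where "h1 = demazure i f"
  define h2 where "h2 = demazure j h1"
  have e1: "(c - d) * g1 = c * f - d * ?t f" unfolding g1_def c_def d_def by (rule D_eq)
  have e2: "(a - b) * g2 = a * g1 - b * ?s g1" unfolding g2_def a_def b_def by (rule D_eq)
  have f1: "(a - b) * h1 = a * f - b * ?s f" unfolding h1_def a_def b_def by (rule D_eq)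
  have f2: "(c - d) * h2 = c * h1 - d * ?t h1" unfolding h2_def c_def d_def by (rule D_eq)
  have se1: "(c - d) * ?s g1 = c * ?s f - d * ?s (?t f)"
    using arg_cong[OF e1, of ?s] by (simp add: swapvar_mult swapvar_diff sc)
  have tf1: "(a - b) * ?t h1 = a * ?t f - b * ?t (?s f)"
    using arg_cong[OF f1, of ?t] by (simp add: swapvar_mult swapvar_diff ta)
  have "(a - b) * (c - d) * g2 = (c - d) * ((a - b) * g2)" by (simp add: algebra_simps)
  also have "\<dots> = a * ((c - d) * g1) - b * ((c - d) * ?s g1)" unfolding e2 by (simp add: algebra_simps)
  also have "\<dots> = a * (c * f - d * ?t f) - b * (c * ?s f - d * ?s (?t f))" unfolding e1 se1 ..
  finally have L: "(a - b) * (c - d) * g2 = a * (c * f - d * ?t f) - b * (c * ?s f - d * ?s (?t f))" .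
  have "(a - b) * (c - d) * h2 = (a - b) * ((c - d) * h2)" by (simp add: algebra_simps)
  also have "\<dots> = c * ((a - b) * h1) - d * ((a - b) * ?t h1)" unfolding f2 by (simp add: algebra_simps)
  also have "\<dots> = c * (a * f - b * ?s f) - d * (a * ?t f - b * ?t (?s f))" unfolding f1 tf1 ..
  finally have R: "(a - b) * (c - d) * h2 = c * (a * f - b * ?s f) - d * (a * ?t f - b * ?t (?s f))" .
  have "(a - b) * (c - d) * g2 = (a - b) * (c - d) * h2" unfolding L R st by (simp add: algebra_simps)
  moreover have "(a - b) * (c - d) \<noteq> 0"
    using var_diff_ne[of i "Suc i"] var_diff_ne[of j "Suc j"] by (simp add: a_def b_def c_def d_def)
  ultimately have "g2 = h2" by simp
  thus ?thesis by (simp add: g2_def g1_def h2_def h1_def)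
qed

lemma D_braid:
  "demazure i (demazure (Suc i) (demazure i f)) = demazure (Suc i) (demazure i (demazure (Suc i) f))"
proof -
  define a where "a = (var i :: mpoly)"
  define b where "b = (var (Suc i) :: mpoly)"
  define c where "c = (var (Suc (Suc i)) :: mpoly)"
  let ?s = "swapvar i" and ?t = "swapvar (Suc i)"
  have sv: "?s a = b" "?s b = a" "?s c = c" by (simp_all add: a_def b_def c_def swapvar_var_other)
  have tv: "?t a = a" "?t b = c" "?t c = b" by (simp_all add: a_def b_def c_def swapvar_var_other)
  define g1 where "g1 = demazure i f"
  define g2 where "g2 = demazure (Suc i) g1"
  define g3 where "g3 = demazure i g2"
  define h1 where "h1 = demazure (Suc i) f"
  define h2 where "h2 = demazure i h1"
  define h3 where "h3 = demazure (Suc i) h2"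
  have E1: "(a - b) * g1 = a * f - b * ?s f" unfolding g1_def a_def b_def by (rule D_eq)
  have E2: "(b - c) * g2 = b * g1 - c * ?t g1" unfolding g2_def c_def b_def by (rule D_eq)
  have E3: "(a - b) * g3 = a * g2 - b * ?s g2" unfolding g3_def a_def b_def by (rule D_eq)
  have sg1: "?s g1 = g1" unfolding g1_def by (rule D_sym)
  have sE2: "(a - c) * ?s g2 = a * g1 - c * ?s (?t g1)"
    using arg_cong[OF E2, of ?s] by (simp add: swapvar_mult swapvar_diff sv sg1)
  have tE1: "(a - c) * ?t g1 = a * ?t f - c * ?t (?s f)"
    using arg_cong[OF E1, of ?t] by (simp add: swapvar_mult swapvar_diff tv)
  have stE1: "(b - c) * ?s (?t g1) = b * ?s (?t f) - c * ?s (?t (?s f))"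
    using arg_cong[OF tE1, of ?s] by (simp add: swapvar_mult swapvar_diff sv)
  have "(a - b) * (b - c) * (a - c) * g3 = (b - c) * (a - c) * ((a - b) * g3)" by (simp add: algebra_simps)
  also have "\<dots> = a * (a - c) * ((b - c) * g2) - b * (b - c) * ((a - c) * ?s g2)"
    unfolding E3 by (simp add: algebra_simps)
  also have "\<dots> = a * (a - c) * (b * g1 - c * ?t g1) - b * (b - c) * (a * g1 - c * ?s (?t g1))"
    unfolding E2 sE2 ..
  also have "\<dots> = a * b * ((a - b) * g1) - a * c * ((a - c) * ?t g1) + b * c * ((b - c) * ?s (?t g1))"
    by (simp add: algebra_simps)
  also have "\<dots> = a * b * (a * f - b * ?s f) - a * c * (a * ?t f - c * ?t (?s f))
       + b * c * (b * ?s (?t f) - c * ?s (?t (?s f)))"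
    unfolding E1 tE1 stE1 ..
  finally have L: "(a - b) * (b - c) * (a - c) * g3 = a * b * (a * f - b * ?s f) - a * c * (a * ?t f - c * ?t (?s f))
       + b * c * (b * ?s (?t f) - c * ?s (?t (?s f)))" .
  have F1: "(b - c) * h1 = b * f - c * ?t f" unfolding h1_def b_def c_def by (rule D_eq)
  have F2: "(a - b) * h2 = a * h1 - b * ?s h1" unfolding h2_def a_def b_def by (rule D_eq)
  have F3: "(b - c) * h3 = b * h2 - c * ?t h2" unfolding h3_def b_def c_def by (rule D_eq)
  have th1: "?t h1 = h1" unfolding h1_def by (rule D_sym)
  have tF2: "(a - c) * ?t h2 = a * h1 - c * ?t (?s h1)"
    using arg_cong[OF F2, of ?t] by (simp add: swapvar_mult swapvar_diff tv th1)
  have sF1: "(a - c) * ?s h1 = a * ?s f - c * ?s (?t f)"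
    using arg_cong[OF F1, of ?s] by (simp add: swapvar_mult swapvar_diff sv)
  have tsF1: "(a - b) * ?t (?s h1) = a * ?t (?s f) - b * ?t (?s (?t f))"
    using arg_cong[OF sF1, of ?t] by (simp add: swapvar_mult swapvar_diff tv)
  have "(a - b) * (b - c) * (a - c) * h3 = (a - b) * (a - c) * ((b - c) * h3)" by (simp add: algebra_simps)
  also have "\<dots> = b * (a - c) * ((a - b) * h2) - c * (a - b) * ((a - c) * ?t h2)"
    unfolding F3 by (simp add: algebra_simps)
  also have "\<dots> = b * (a - c) * (a * h1 - b * ?s h1) - c * (a - b) * (a * h1 - c * ?t (?s h1))"
    unfolding F2 tF2 ..
  also have "\<dots> = a * a * ((b - c) * h1) - b * b * ((a - c) * ?s h1) + c * c * ((a - b) * ?t (?s h1))"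
    by (simp add: algebra_simps)
  also have "\<dots> = a * a * (b * f - c * ?t f) - b * b * (a * ?s f - c * ?s (?t f))
      + c * c * (a * ?t (?s f) - b * ?t (?s (?t f)))"
    unfolding F1 sF1 tsF1 ..
  finally have R: "(a - b) * (b - c) * (a - c) * h3 = a * a * (b * f - c * ?t f) - b * b * (a * ?s f - c * ?s (?t f))
      + c * c * (a * ?t (?s f) - b * ?t (?s (?t f)))" .
  have br: "?s (?t (?s f)) = ?t (?s (?t f))" by (rule swapvar_braid)
  have "(a - b) * (b - c) * (a - c) * g3 = (a - b) * (b - c) * (a - c) * h3"
    unfolding L R br by (simp add: algebra_simps)
  moreover have "(a - b) * (b - c) * (a - c) \<noteq> 0"
    using var_diff_ne[of i "Suc i"] var_diff_ne[of "Suc i" "Suc (Suc i)"] var_diff_ne[of i "Suc (Suc i)"]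
    by (simp add: a_def b_def c_def)
  ultimately have "g3 = h3" by simp
  thus ?thesis by (simp add: g3_def g2_def g1_def h3_def h2_def h1_def)
qed



lemma swp_adj: "\<alpha>[i := \<alpha> ! Suc i, Suc i := \<alpha> ! i] = swp i (Suc i) \<alpha>"
  by (simp add: swp_def)

lemma pl_dec:
  assumes "Suc i < length \<alpha>" "\<alpha>!i < \<alpha>!Suc i"
  shows "perm_length (length (swp i (Suc i) \<alpha>)) (wperm (swp i (Suc i) \<alpha>)) < perm_length (length \<alpha>) (wperm \<alpha>)"
  using SW[of i "Suc i" \<alpha>] assms by auto

lemma keyrel_step': "Suc i < length \<alpha> \<Longrightarrow> \<alpha>!i < \<alpha>!Suc i \<Longrightarrow> keyrel (swp i (Suc i) \<alpha>) g \<Longrightarrow>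
   keyrel \<alpha> (demazure i g)"
  using keyrel.step[of i \<alpha> g] by (simp add: swp_adj)

lemma keyrel_exists: "\<exists>f. keyrel \<alpha> f"
proof (induction "perm_length (length \<alpha>) (wperm \<alpha>)" arbitrary: \<alpha> rule: less_induct)
  case less
  show ?case
  proof (cases "sorted_wrt (\<ge>) \<alpha>")
    case True thus ?thesis using keyrel.dec by blast
  next
    case False
    have "transp ((\<ge>) :: nat \<Rightarrow> nat \<Rightarrow> bool)" by (auto simp: transp_def)
    then obtain i where i: "Suc i < length \<alpha>" "\<not> \<alpha>!i \<ge> \<alpha>!Suc i"
      using False sorted_wrt_iff_nth_Suc_transp by blast
    hence i2: "\<alpha>!i < \<alpha>!Suc i" by simp
    obtain g where "keyrel (swp i (Suc i) \<alpha>) g" using less.hyps[OF pl_dec[OF i(1) i2]] by blast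
    thus ?thesis using keyrel_step'[OF i(1) i2] by blast
  qed
qed

lemma sorted_no_ascent: "sorted_wrt (\<ge>) (\<alpha>::nat list) \<Longrightarrow> Suc i < length \<alpha> \<Longrightarrow> \<not> \<alpha>!i < \<alpha>!Suc i"
  using sorted_wrt_nth_less[of "(\<ge>)" \<alpha> i "Suc i"] by (simp add: not_less)

lemma two_steps:
  assumes IH: "\<And>\<beta> f g. perm_length (length \<beta>) (wperm \<beta>) < perm_length (length \<alpha>) (wperm \<alpha>) \<Longrightarrow>
       keyrel \<beta> f \<Longrightarrow> keyrel \<beta> g \<Longrightarrow> f = g"
    and ij: "i < j" "Suc j < length \<alpha>" and ai: "\<alpha>!i < \<alpha>!Suc i" and aj: "\<alpha>!j < \<alpha>!Suc j"
    and f': "keyrel (swp i (Suc i) \<alpha>) f'" and g': "keyrel (swp j (Suc j) \<alpha>) g'"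
  shows "demazure i f' = demazure j g'"
proof -
  have ni: "Suc i < length \<alpha>" using ij by simp
  define A1 where "A1 = swp i (Suc i) \<alpha>"
  define B1 where "B1 = swp j (Suc j) \<alpha>"
  have lA1: "length A1 = length \<alpha>" and lB1: "length B1 = length \<alpha>" by (simp_all add: A1_def B1_def)
  have IA: "perm_length (length A1) (wperm A1) < perm_length (length \<alpha>) (wperm \<alpha>)"
    unfolding A1_def by (rule pl_dec[OF ni ai])
  have IB: "perm_length (length B1) (wperm B1) < perm_length (length \<alpha>) (wperm \<alpha>)"
    unfolding B1_def by (rule pl_dec[OF ij(2) aj])
  show ?thesis
  proof (cases "j = Suc i")
    case True
    define A2 where "A2 = swp (Suc i) (Suc (Suc i)) A1"
    define B2 where "B2 = swp i (Suc i) B1"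
    define C where "C = swp i (Suc i) A2"
    have n2: "Suc (Suc i) < length \<alpha>" using ij True by simp
    have CB: "swp (Suc i) (Suc (Suc i)) B2 = C"
      unfolding C_def A2_def B2_def A1_def B1_def True
      by (rule nth_equalityI) (use n2 in \<open>auto simp: nth_swp\<close>)
    obtain h0 where h0: "keyrel C h0" using keyrel_exists by blast
    have A2a: "A2!i < A2!Suc i" using n2 ai aj True by (simp add: A2_def A1_def nth_swp)
    have kA2: "keyrel A2 (demazure i h0)"
      using keyrel_step'[of i A2 h0] A2a h0 n2 by (simp add: A2_def A1_def C_def)
    have A1a: "A1!Suc i < A1!Suc (Suc i)" using n2 ai aj True by (simp add: A1_def nth_swp)
    have kA1: "keyrel A1 (demazure (Suc i) (demazure i h0))"
      using keyrel_step'[of "Suc i" A1] A1a kA2 n2 by (simp add: A2_def A1_def)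
    have fe: "f' = demazure (Suc i) (demazure i h0)" using IH[OF IA _ kA1] f' by (simp add: A1_def)
    have B2a: "B2!Suc i < B2!Suc (Suc i)" using n2 ai aj True by (simp add: B2_def B1_def nth_swp)
    have kB2: "keyrel B2 (demazure (Suc i) h0)"
      using keyrel_step'[of "Suc i" B2 h0] B2a h0 n2 CB by (simp add: B2_def B1_def)
    have B1a: "B1!i < B1!Suc i" using n2 ai aj True by (simp add: B1_def nth_swp)
    have kB1: "keyrel B1 (demazure i (demazure (Suc i) h0))"
      using keyrel_step'[of i B1] B1a kB2 n2 by (simp add: B2_def B1_def)
    have ge: "g' = demazure i (demazure (Suc i) h0)" using IH[OF IB _ kB1] g' by (simp add: B1_def)
    show ?thesis using fe ge True D_braid by simp
  next
    case False
    hence ij2: "Suc i < j" using ij by simp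
    define C where "C = swp j (Suc j) A1"
    have CB: "swp i (Suc i) B1 = C"
      unfolding C_def A1_def B1_def
      by (rule nth_equalityI) (use ij ij2 in \<open>auto simp: nth_swp\<close>)
    obtain h0 where h0: "keyrel C h0" using keyrel_exists by blast
    have A1a: "A1!j < A1!Suc j" using ij2 ij aj by (simp add: A1_def nth_swp)
    have kA1: "keyrel A1 (demazure j h0)"
      using keyrel_step'[of j A1 h0] A1a h0 ij by (simp add: C_def A1_def)
    have fe: "f' = demazure j h0" using IH[OF IA _ kA1] f' by (simp add: A1_def)
    have B1a: "B1!i < B1!Suc i" using ij2 ij ai by (simp add: B1_def nth_swp)
    have kB1: "keyrel B1 (demazure i h0)"
      using keyrel_step'[of i B1 h0] B1a h0 ij CB by (simp add: B1_def)
    have ge: "g' = demazure i h0" using IH[OF IB _ kB1] g' by (simp add: B1_def)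
    show ?thesis using fe ge D_comm[OF ij2] by simp
  qed
qed

lemma keyrel_unique: "keyrel \<alpha> f \<Longrightarrow> keyrel \<alpha> g \<Longrightarrow> f = g"
proof (induction "perm_length (length \<alpha>) (wperm \<alpha>)" arbitrary: \<alpha> f g rule: less_induct)
  case less
  from less.prems(1) show ?case
  proof cases
    case dec
    from less.prems(2) show ?thesis
    proof cases
      case dec thus ?thesis using \<open>f = monom \<alpha>\<close> by simp
    next
      case (step i g')
      thus ?thesis using dec sorted_no_ascent by blast
    qed
  next
    case (step i f')
    note fs = step
    from less.prems(2) show ?thesis
    proof cases
      case dec thus ?thesis using fs sorted_no_ascent by blast
    next
      case (step j g')
      have f'': "keyrel (swp i (Suc i) \<alpha>) f'" using fs by (simp add: swp_adj)
      have g'': "keyrel (swp j (Suc j) \<alpha>) g'" using step by (simp add: swp_adj)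
      consider "i = j" | "i < j" | "j < i" by linarith
      thus ?thesis
      proof cases
        case 1
        have "f' = g'" using less.hyps[OF pl_dec[OF fs(2) fs(3)] f''] g'' 1 by simp
        thus ?thesis using fs step 1 by simp
      next
        case 2
        have "demazure i f' = demazure j g'"
          using two_steps[OF less.hyps 2 step(2) fs(3) step(3) f'' g''] by simp
        thus ?thesis using fs step by simp
      next
        case 3
        have "demazure j g' = demazure i f'"
          using two_steps[OF less.hyps 3 fs(2) step(3) fs(3) g'' f''] by simp
        thus ?thesis using fs step by simp
      qed
    qed
  qed
qed

lemma keyrel_key: "keyrel \<alpha> (key \<alpha>)"
proof -
  have "\<exists>!f. keyrel \<alpha> f" using keyrel_exists keyrel_unique by blast
  thus ?thesis unfolding key_def by (rule theI')
qed



lemma exp_point_inj: "exp_point m = exp_point m' \<Longrightarrow> m = m'"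
  by (rule poly_mapping_eqI) (metis exp_point_def of_nat_eq_iff)

definition sig :: "nat \<Rightarrow> (nat \<Rightarrow> real) \<Rightarrow> (nat \<Rightarrow> real)" where
  "sig i x = (\<lambda>k. x (Transposition.transpose i (Suc i) k))"

lemma exp_point_swap: "exp_point (swap_exp i m) = sig i (exp_point m)"
  by (simp add: exp_point_def sig_def lookup_swap_exp)

lemma scaleR_fun_apply: "(r *\<^sub>R (x :: nat \<Rightarrow> real)) k = r * x k"
  by (simp add: scaleR_fun_def)

lemma linear_sig: "linear (sig i)"
  by (rule linearI) (simp_all add: sig_def scaleR_fun_def fun_eq_iff)

lemma lookup_nth_lt: "k < length \<beta> \<Longrightarrow> Poly_Mapping.lookup (Poly_Mapping.nth \<beta>) k = \<beta> ! k"
  by (simp add: nth_default_def)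

lemma nth_swp_exp: "Suc i < length \<beta> \<Longrightarrow>
   Poly_Mapping.nth (swp i (Suc i) \<beta>) = swap_exp i (Poly_Mapping.nth \<beta>)"
proof (rule poly_mapping_eqI)
  fix k assume n: "Suc i < length \<beta>"
  have "(Transposition.transpose i (Suc i) k < length \<beta>) = (k < length \<beta>)"
    using n by (auto simp: Transposition.transpose_def)
  thus "Poly_Mapping.lookup (Poly_Mapping.nth (swp i (Suc i) \<beta>)) k =
        Poly_Mapping.lookup (swap_exp i (Poly_Mapping.nth \<beta>)) k"
    using n by (simp add: lookup_swap_exp nth_default_def nth_swp_tr)
qed

lemma seg_Eexp:
  assumes k: "Poly_Mapping.lookup m (Suc i) \<le> k \<and> k \<le> Poly_Mapping.lookup m i \<or>
              Poly_Mapping.lookup m i < k \<and> k < Poly_Mapping.lookup m (Suc i)"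
  shows "exp_point (Eexp i m k) \<in> closed_segment (exp_point m) (exp_point (swap_exp i m))"
proof (cases "Poly_Mapping.lookup m i = Poly_Mapping.lookup m (Suc i)")
  case True
  hence "k = Poly_Mapping.lookup m i" using k by auto
  thus ?thesis by (simp add: Eexp_a)
next
  case False
  define a where "a = Poly_Mapping.lookup m i"
  define b where "b = Poly_Mapping.lookup m (Suc i)"
  define u where "u = (real a - real k) / (real a - real b)"
  have ab: "real a - real b \<noteq> 0" using False by (simp add: a_def b_def)
  have kab: "k \<le> a + b" using k by (auto simp: a_def b_def)
  have u1: "0 \<le> u" "u \<le> 1"
  proof -
    have "(b \<le> k \<and> k \<le> a \<and> b < a) \<or> (a < k \<and> k < b)" using k False by (auto simp: a_def b_def)
    thus "0 \<le> u" "u \<le> 1" unfolding u_def by (auto simp: divide_simps)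
  qed
  have ua: "u * (real a - real b) = real a - real k" using ab by (simp add: u_def)
  have "exp_point (Eexp i m k) = (1 - u) *\<^sub>R exp_point m + u *\<^sub>R exp_point (swap_exp i m)"
  proof
    fix x
    show "exp_point (Eexp i m k) x = ((1 - u) *\<^sub>R exp_point m + u *\<^sub>R exp_point (swap_exp i m)) x"
    proof -
      consider "x = i" | "x = Suc i" | "x \<noteq> i \<and> x \<noteq> Suc i" by blast
      thus ?thesis
      proof cases
        case 1
        have "real k = (1 - u) * real a + u * real b" using ua by (simp add: algebra_simps)
        thus ?thesis using 1 by (simp add: exp_point_def lookup_Eexp scaleR_fun_apply lookup_swap_exp a_def b_def)
      next
        case 2
        have "real (a + b - k) = (1 - u) * real b + u * real a" using ua kab by (simp add: algebra_simps of_nat_diff)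
        thus ?thesis using 2 by (simp add: exp_point_def lookup_Eexp scaleR_fun_apply lookup_swap_exp a_def b_def)
      next
        case 3
        hence "Transposition.transpose i (Suc i) x = x" by (simp add: Transposition.transpose_def)
        thus ?thesis using 3 by (simp add: exp_point_def lookup_Eexp scaleR_fun_apply lookup_swap_exp algebra_simps)
      qed
    qed
  qed
  thus ?thesis using u1 by (auto simp: in_segment)
qed

lemma extreme_seg: "x extreme_point_of S \<Longrightarrow> a \<in> S \<Longrightarrow> b \<in> S \<Longrightarrow> x \<in> closed_segment a b \<Longrightarrow> x = a \<or> x = b"
  by (auto simp: extreme_point_of_def open_segment_def)

section \<open>the extremality argument\<close>

definition Pts :: "nat list \<Rightarrow> (nat \<Rightarrow> real) set" where
  "Pts \<alpha> = (\<lambda>\<beta>. exp_point (Poly_Mapping.nth \<beta>)) ` Cset \<alpha>"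

lemma sum_nth_mset: "mset \<beta> = mset \<alpha> \<Longrightarrow> (\<Sum>k<length \<beta>. f (\<beta>!k)) = (\<Sum>k<length \<alpha>. f (\<alpha>!k))"
proof -
  assume m: "mset \<beta> = mset \<alpha>"
  have "(\<Sum>k<length \<beta>. f (\<beta>!k)) = sum_list (map f \<beta>)"
    by (simp add: sum_list_sum_nth atLeast0LessThan)
  also have "\<dots> = sum_mset (image_mset f (mset \<beta>))" by (simp flip: sum_mset_sum_list mset_map)
  also have "\<dots> = sum_mset (image_mset f (mset \<alpha>))" using m by simp
  also have "\<dots> = sum_list (map f \<alpha>)" by (simp flip: sum_mset_sum_list mset_map)
  also have "\<dots> = (\<Sum>k<length \<alpha>. f (\<alpha>!k))" by (simp add: sum_list_sum_nth atLeast0LessThan)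
  finally show ?thesis .
qed

lemma sq_comb:
  assumes "u + v = 1"
  shows "(u * p + v * q :: real)^2 = u * p^2 + v * q^2 - u * v * (p - q)^2"
proof -
  have v: "v = 1 - u" using assms by simp
  show ?thesis unfolding v by (simp add: power2_eq_square algebra_simps)
qed

lemma EXT:
  assumes g: "\<gamma> \<in> Cset \<alpha>"
  shows "exp_point (Poly_Mapping.nth \<gamma>) extreme_point_of convex hull (Pts \<alpha>)"
proof -
  let ?n = "length \<alpha>"
  define \<phi> where "\<phi> x = (\<Sum>k<?n. (x k)^2)" for x :: "nat \<Rightarrow> real"
  define R where "R = (\<Sum>k<?n. (real (\<alpha>!k))^2)"
  define Z where "Z = {x :: nat \<Rightarrow> real. \<forall>k\<ge>?n. x k = 0}"
  define B where "B = {x. \<phi> x \<le> R}"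
  have Pphi: "\<phi> (exp_point (Poly_Mapping.nth \<beta>)) = R" if "\<beta> \<in> Cset \<alpha>" for \<beta>
  proof -
    have l: "length \<beta> = ?n" "mset \<beta> = mset \<alpha>" using that by (auto simp: Cset_def)
    have "\<phi> (exp_point (Poly_Mapping.nth \<beta>)) = (\<Sum>k<length \<beta>. (real (\<beta>!k))^2)"
      unfolding \<phi>_def exp_point_def using l by (intro sum.cong) (auto simp: nth_default_def)
    also have "\<dots> = R" unfolding R_def by (rule sum_nth_mset[OF l(2)])
    finally show ?thesis .
  qed
  have PZ: "exp_point (Poly_Mapping.nth \<beta>) \<in> Z" if "\<beta> \<in> Cset \<alpha>" for \<beta>
    using that by (auto simp: Z_def Cset_def exp_point_def nth_default_def)
  have comb: "\<phi> (u *\<^sub>R x + v *\<^sub>R y) = u * \<phi> x + v * \<phi> y - u * v * (\<Sum>k<?n. (x k - y k)^2)"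
    if uv: "u + v = 1" for u v x y
  proof -
    have "\<phi> (u *\<^sub>R x + v *\<^sub>R y) = (\<Sum>k<?n. (u * x k + v * y k)^2)"
      unfolding \<phi>_def by (simp add: scaleR_fun_apply)
    also have "\<dots> = (\<Sum>k<?n. u * (x k)^2 + v * (y k)^2 - u * v * (x k - y k)^2)"
      by (rule sum.cong[OF refl]) (rule sq_comb[OF uv])
    also have "\<dots> = u * \<phi> x + v * \<phi> y - u * v * (\<Sum>k<?n. (x k - y k)^2)"
      unfolding \<phi>_def by (simp only: sum.distrib sum_subtractf sum_distrib_left)
    finally show ?thesis .
  qed
  have cB: "convex B" unfolding convex_def B_def
  proof (intro ballI allI impI, simp)
    fix x y and u v :: real assume xy: "\<phi> x \<le> R" "\<phi> y \<le> R" and uv: "0 \<le> u" "0 \<le> v" "u + v = 1"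
    have "u * v * (\<Sum>k<?n. (x k - y k)^2) \<ge> 0" using uv by (simp add: sum_nonneg)
    moreover have "u * \<phi> x + v * \<phi> y \<le> u * R + v * R"
      using xy uv by (simp add: add_mono mult_left_mono)
    ultimately show "\<phi> (u *\<^sub>R x + v *\<^sub>R y) \<le> R" using comb[OF uv(3)] uv(3)
      by (simp add: distrib_right[symmetric])
  qed
  have cZ: "convex Z" unfolding convex_def Z_def by (simp add: scaleR_fun_apply)
  have sub: "convex hull (Pts \<alpha>) \<subseteq> B \<inter> Z"
  proof (rule hull_minimal)
    show "Pts \<alpha> \<subseteq> B \<inter> Z" by (auto simp: Pts_def B_def Pphi PZ)
    show "convex (B \<inter> Z)" using cB cZ by (rule convex_Int)
  qed
  show ?thesis
    unfolding extreme_point_of_def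
  proof (intro conjI ballI)
    show "exp_point (Poly_Mapping.nth \<gamma>) \<in> convex hull Pts \<alpha>"
      by (rule hull_inc) (use g in \<open>simp add: Pts_def\<close>)
  next
    fix a b assume a: "a \<in> convex hull Pts \<alpha>" and b: "b \<in> convex hull Pts \<alpha>"
    show "exp_point (Poly_Mapping.nth \<gamma>) \<notin> open_segment a b"
    proof
      assume "exp_point (Poly_Mapping.nth \<gamma>) \<in> open_segment a b"
      then obtain u where ab: "a \<noteq> b" and u: "0 < u" "u < 1"
        and e: "exp_point (Poly_Mapping.nth \<gamma>) = (1 - u) *\<^sub>R a + u *\<^sub>R b"
        by (auto simp: in_segment)
      have aB: "\<phi> a \<le> R" "a \<in> Z" and bB: "\<phi> b \<le> R" "b \<in> Z" using a b sub by (auto simp: B_def)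
      have "R = \<phi> ((1 - u) *\<^sub>R a + u *\<^sub>R b)" using Pphi[OF g] e by simp
      also have "\<dots> = (1 - u) * \<phi> a + u * \<phi> b - (1 - u) * u * (\<Sum>k<?n. (a k - b k)^2)"
        by (rule comb) simp
      finally have RR: "R = (1 - u) * \<phi> a + u * \<phi> b - (1 - u) * u * (\<Sum>k<?n. (a k - b k)^2)" .
      have m1: "(1 - u) * \<phi> a \<le> (1 - u) * R" by (rule mult_left_mono) (use aB u in auto)
      have m2: "u * \<phi> b \<le> u * R" by (rule mult_left_mono) (use bB u in auto)
      have m3: "(1 - u) * R + u * R = R" by (simp add: algebra_simps)
      have "(1 - u) * u * (\<Sum>k<?n. (a k - b k)^2) \<le> 0"
        using RR m1 m2 m3 by linarith
      moreover have "(1 - u) * u > 0" using u by simp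
      ultimately have "(\<Sum>k<?n. (a k - b k)^2) \<le> 0"
        by (metis mult_pos_pos not_le)
      hence "\<forall>k\<in>{..<?n}. (a k - b k)^2 = 0"
        using sum_nonneg_eq_0_iff[of "{..<?n}" "\<lambda>k. (a k - b k)^2"]
        by (simp add: antisym sum_nonneg)
      hence "\<forall>k<?n. a k = b k" by simp
      moreover have "\<forall>k\<ge>?n. a k = b k" using aB bB by (simp add: Z_def)
      ultimately have "a = b" by (metis not_less ext)
      thus False using ab by simp
    qed
  qed
qed

lemma KEY:
  "keyrel \<alpha> f \<Longrightarrow> exp_point ` Poly_Mapping.keys f \<subseteq> convex hull (Pts \<alpha>) \<and>
     (\<forall>\<beta>\<in>Cset \<alpha>. Poly_Mapping.lookup f (Poly_Mapping.nth \<beta>) = 1)"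
proof (induction rule: keyrel.induct)
  case (dec \<alpha>)
  have C: "Cset \<alpha> = {\<alpha>}" using Cset_sorted[OF dec] Cset_self by blast
  show ?case
  proof
    show "exp_point ` Poly_Mapping.keys (monom \<alpha>) \<subseteq> convex hull Pts \<alpha>"
      using C by (auto simp: monom_def Pts_def intro!: hull_inc)
    show "\<forall>\<beta>\<in>Cset \<alpha>. Poly_Mapping.lookup (monom \<alpha>) (Poly_Mapping.nth \<beta>) = 1" using C by (simp add: monom_def)
  qed
next
  case (step i \<alpha> g)
  define \<alpha>' where "\<alpha>' = swp i (Suc i) \<alpha>"
  have IH1: "exp_point ` Poly_Mapping.keys g \<subseteq> convex hull Pts \<alpha>'"
    and IH2: "\<forall>\<beta>\<in>Cset \<alpha>'. Poly_Mapping.lookup g (Poly_Mapping.nth \<beta>) = 1"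
    using step.IH by (simp_all add: \<alpha>'_def swp_adj)
  have n: "Suc i < length \<alpha>" and a: "\<alpha>!i < \<alpha>!Suc i" using step.hyps by auto
  let ?Q = "convex hull Pts \<alpha>"
  have h1: "Pts \<alpha>' \<subseteq> Pts \<alpha>" using P2a[OF n a] by (auto simp: Pts_def \<alpha>'_def)
  have h2: "sig i ` Pts \<alpha>' \<subseteq> Pts \<alpha>"
  proof
    fix y assume "y \<in> sig i ` Pts \<alpha>'"
    then obtain \<beta> where \<beta>: "\<beta> \<in> Cset \<alpha>'" "y = sig i (exp_point (Poly_Mapping.nth \<beta>))" by (auto simp: Pts_def)
    have lb: "Suc i < length \<beta>" using \<beta> n by (simp add: Cset_def \<alpha>'_def)
    have "y = exp_point (Poly_Mapping.nth (swp i (Suc i) \<beta>))" using \<beta> lb by (simp add: nth_swp_exp exp_point_swap)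
    moreover have "swp i (Suc i) \<beta> \<in> Cset \<alpha>" using P2b[OF n a] \<beta> by (simp add: \<alpha>'_def)
    ultimately show "y \<in> Pts \<alpha>" by (simp add: Pts_def)
  qed
  have Q'Q: "convex hull Pts \<alpha>' \<subseteq> ?Q" using h1 by (rule hull_mono)
  have sQ: "sig i ` (convex hull Pts \<alpha>') \<subseteq> ?Q"
    using convex_hull_linear_image[OF linear_sig, of i "Pts \<alpha>'"] hull_mono[OF h2] by simp
  have ends: "exp_point m \<in> ?Q \<and> exp_point (swap_exp i m) \<in> ?Q" if "m \<in> Poly_Mapping.keys g" for m
    using IH1 that Q'Q sQ by (auto simp: exp_point_swap)
  have segQ: "exp_point \<gamma> \<in> closed_segment (exp_point m) (exp_point (swap_exp i m))"
    if "Poly_Mapping.lookup (Gp i m) \<gamma> \<noteq> 0" for m \<gamma>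
    using G2[OF that] seg_Eexp by blast
  show ?case
  proof
    show "exp_point ` Poly_Mapping.keys (demazure i g) \<subseteq> ?Q"
    proof
      fix y assume "y \<in> exp_point ` Poly_Mapping.keys (demazure i g)"
      then obtain \<gamma> where \<gamma>: "\<gamma> \<in> Poly_Mapping.keys (PI i g)" "y = exp_point \<gamma>" by (auto simp: demazure_PI)
      obtain m where m: "m \<in> Poly_Mapping.keys g" "Poly_Mapping.lookup (Gp i m) \<gamma> \<noteq> 0"
        using keys_PI[OF \<gamma>(1)] by blast
      have "closed_segment (exp_point m) (exp_point (swap_exp i m)) \<subseteq> ?Q"
        using ends[OF m(1)] by (intro closed_segment_subset) auto
      thus "y \<in> ?Q" using segQ[OF m(2)] \<gamma> by auto
    qed
  next
    show "\<forall>\<beta>\<in>Cset \<alpha>. Poly_Mapping.lookup (demazure i g) (Poly_Mapping.nth \<beta>) = 1"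
    proof
      fix \<beta> assume \<beta>: "\<beta> \<in> Cset \<alpha>"
      define \<gamma> where "\<gamma> = Poly_Mapping.nth \<beta>"
      have lb: "Suc i < length \<beta>" using \<beta> n by (simp add: Cset_def)
      have ext: "exp_point \<gamma> extreme_point_of ?Q" using EXT[OF \<beta>] by (simp add: \<gamma>_def)
      have claim: "m = \<gamma> \<or> m = swap_exp i \<gamma>"
        if "m \<in> Poly_Mapping.keys g" "Poly_Mapping.lookup (Gp i m) \<gamma> \<noteq> 0" for m
      proof -
        have "exp_point \<gamma> = exp_point m \<or> exp_point \<gamma> = exp_point (swap_exp i m)"
          using extreme_seg[OF ext _ _ segQ[OF that(2)]] ends[OF that(1)] by blast
        hence "\<gamma> = m \<or> \<gamma> = swap_exp i m" using exp_point_inj by blast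
        thus ?thesis by auto
      qed
      define h where "h m = Poly_Mapping.lookup g m * Poly_Mapping.lookup (Gp i m) \<gamma>" for m
      define T where "T = {\<gamma>, swap_exp i \<gamma>}"
      have "Poly_Mapping.lookup (demazure i g) \<gamma> = (\<Sum>m\<in>Poly_Mapping.keys g. h m)"
        by (simp add: demazure_PI lookup_PI h_def)
      also have "\<dots> = (\<Sum>m\<in>T. h m)"
      proof -
        have "(\<Sum>m\<in>Poly_Mapping.keys g. h m) = (\<Sum>m\<in>Poly_Mapping.keys g \<union> T. h m)"
          by (rule sum.mono_neutral_left) (auto simp: T_def h_def in_keys_iff)
        also have "\<dots> = (\<Sum>m\<in>T. h m)"
        proof (rule sum.mono_neutral_right)
          show "\<forall>m\<in>Poly_Mapping.keys g \<union> T - T. h m = 0"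
          proof
            fix m assume m: "m \<in> Poly_Mapping.keys g \<union> T - T"
            hence "m \<in> Poly_Mapping.keys g" "m \<noteq> \<gamma>" "m \<noteq> swap_exp i \<gamma>" by (auto simp: T_def)
            hence "Poly_Mapping.lookup (Gp i m) \<gamma> = 0" using claim by blast
            thus "h m = 0" by (simp add: h_def)
          qed
        qed (auto simp: T_def)
        finally show ?thesis .
      qed
      finally have L: "Poly_Mapping.lookup (demazure i g) \<gamma> = (\<Sum>m\<in>T. h m)" .
      have gi: "Poly_Mapping.lookup \<gamma> i = \<beta>!i" "Poly_Mapping.lookup \<gamma> (Suc i) = \<beta>!Suc i"
        using lb by (simp_all add: \<gamma>_def nth_default_def)
      have si: "Poly_Mapping.lookup (swap_exp i \<gamma>) i = \<beta>!Suc i" "Poly_Mapping.lookup (swap_exp i \<gamma>) (Suc i) = \<beta>!i"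
        using gi by (simp_all add: lookup_swap_exp)
      have sg: "swap_exp i \<gamma> = Poly_Mapping.nth (swp i (Suc i) \<beta>)" using lb by (simp add: \<gamma>_def nth_swp_exp)
      consider "\<beta>!i = \<beta>!Suc i" | "\<beta>!Suc i < \<beta>!i" | "\<beta>!i < \<beta>!Suc i" by linarith
      thus "Poly_Mapping.lookup (demazure i g) (Poly_Mapping.nth \<beta>) = 1"
      proof cases
        case 1
        have "swap_exp i \<gamma> = \<gamma>"
          by (rule poly_mapping_eqI) (use gi 1 in \<open>auto simp: lookup_swap_exp Transposition.transpose_def\<close>)
        hence T1: "T = {\<gamma>}" by (simp add: T_def)
        have "\<beta> \<in> Cset \<alpha>'" using P4a[OF n a \<beta>] 1 by (simp add: \<alpha>'_def)
        hence "Poly_Mapping.lookup g \<gamma> = 1" using IH2 by (simp add: \<gamma>_def)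
        thus ?thesis using L T1 G3[of i \<gamma>] gi 1 by (simp add: h_def \<gamma>_def)
      next
        case 2
        have ne: "swap_exp i \<gamma> \<noteq> \<gamma>" using gi si 2 by (metis less_irrefl)
        have "\<beta> \<in> Cset \<alpha>'" using P4a[OF n a \<beta>] 2 by (simp add: \<alpha>'_def)
        hence g1: "Poly_Mapping.lookup g \<gamma> = 1" using IH2 by (simp add: \<gamma>_def)
        have hg: "h \<gamma> = 1" using G3[of i \<gamma>] gi 2 g1 by (simp add: h_def)
        have "Poly_Mapping.lookup (Gp i (swap_exp i \<gamma>)) (swap_exp i (swap_exp i \<gamma>)) = 0"
          using G4[of i "swap_exp i \<gamma>"] si 2 by simp
        hence hs: "h (swap_exp i \<gamma>) = 0" by (simp add: h_def)
        have "(\<Sum>m\<in>T. h m) = h \<gamma> + h (swap_exp i \<gamma>)" using ne by (simp add: T_def)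
        thus ?thesis using L hg hs by (simp add: \<gamma>_def)
      next
        case 3
        have ne: "swap_exp i \<gamma> \<noteq> \<gamma>" using gi si 3 by (metis less_irrefl)
        have "swp i (Suc i) \<beta> \<in> Cset \<alpha>'" using P4b[OF n a \<beta>] 3 by (simp add: \<alpha>'_def)
        hence g1: "Poly_Mapping.lookup g (swap_exp i \<gamma>) = 1" using IH2 sg by simp
        have hg: "h \<gamma> = 0" using G3[of i \<gamma>] gi 3 by (simp add: h_def)
        have "Poly_Mapping.lookup (Gp i (swap_exp i \<gamma>)) (swap_exp i (swap_exp i \<gamma>)) = 1"
          using G4[of i "swap_exp i \<gamma>"] si 3 by simp
        hence hs: "h (swap_exp i \<gamma>) = 1" using g1 by (simp add: h_def)
        have "(\<Sum>m\<in>T. h m) = h \<gamma> + h (swap_exp i \<gamma>)" using ne by (simp add: T_def)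
        thus ?thesis using L hg hs by (simp add: \<gamma>_def)
      qed
    qed
  qed
qed

theorem theorem1p2:
  fixes \<alpha> :: "nat list"
  shows "vertices (newton (key \<alpha>)) = (\<lambda>\<beta>. exp_point (Poly_Mapping.nth \<beta>)) ` {\<beta>. comp_le \<beta> \<alpha>}"
proof -
  have K: "exp_point ` Poly_Mapping.keys (key \<alpha>) \<subseteq> convex hull (Pts \<alpha>)"
     "\<forall>\<beta>\<in>Cset \<alpha>. Poly_Mapping.lookup (key \<alpha>) (Poly_Mapping.nth \<beta>) = 1"
    using KEY[OF keyrel_key] by auto
  have P: "Pts \<alpha> \<subseteq> exp_point ` Poly_Mapping.keys (key \<alpha>)"
    using K(2) by (auto simp: Pts_def in_keys_iff)
  have H: "convex hull (exp_point ` Poly_Mapping.keys (key \<alpha>)) = convex hull (Pts \<alpha>)"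
  proof
    show "convex hull (exp_point ` Poly_Mapping.keys (key \<alpha>)) \<subseteq> convex hull (Pts \<alpha>)"
      by (rule hull_minimal[OF K(1)]) (rule convex_convex_hull)
    show "convex hull (Pts \<alpha>) \<subseteq> convex hull (exp_point ` Poly_Mapping.keys (key \<alpha>))"
      using P by (rule hull_mono)
  qed
  have "vertices (newton (key \<alpha>)) = {v. v extreme_point_of convex hull (Pts \<alpha>)}"
    by (simp add: vertices_def newton_def H)
  also have "\<dots> = Pts \<alpha>"
  proof
    show "{v. v extreme_point_of convex hull Pts \<alpha>} \<subseteq> Pts \<alpha>" using extreme_point_of_convex_hull by blast
    show "Pts \<alpha> \<subseteq> {v. v extreme_point_of convex hull Pts \<alpha>}" using EXT by (auto simp: Pts_def)
  qed
  also have "\<dots> = (\<lambda>\<beta>. exp_point (Poly_Mapping.nth \<beta>)) ` {\<beta>. comp_le \<beta> \<alpha>}"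
    by (simp add: Pts_def comp_le_iff)
  finally show ?thesis .
qed

end
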